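(* Assume (A1), (B1) and (B2). Let $c(\beta)$ denote the optimal value of $(\mathrm{P}_\beta)$. Then, as $n\to\infty$, $$r_n\big(c(b_n)-c(b)\big)\xrightarrow{D}\max_{1\le k\le K}G^T\lambda(I_k)=\max_{\lambda\text{ optimal for }(\mathrm{D}_b)}G^T\lambda.$$
   Context: $A\in\mathbb{R}^{m\times d}$ of full rank $m\le d$, $b\in\mathbb{R}^m$, $c\in\mathbb{R}^d$. $(\mathrm{P}_\beta)$: $\min c^Tx$ s.t. $Ax=\beta,x\ge0$; $(\mathrm{D}_\beta)$: $\max\beta^T\lambda$ s.t. $A^T\lambda\le c$. A basis is $I\subseteq[d]$, $|I|=m$, $A_I$ invertible; $x(I,\beta)$ has coordinates $(A_I)^{-1}\beta$ on $I$ and $0$ elsewhere; $\lambda(I)=(A_I)^{-T}c_I$; $I$ is dual feasible if $A^T\lambda(I)\le c$. $I_1,\dots,I_K$ are exactly the dual feasible bases with $x(I_k,b)\ge0$ (so the $\lambda(I_k)$ are the dual optimal basic solutions arising from primal–dual optimal bases). (A1): the optimal set of $(\mathrm{P}_b)$ is non-empty and bounded. Stochastic: $r_n\to\infty$, $m_0\in[m]$, random $b_n$ agreeing with $b$ in the last $m-m_0$ coordinates; (B1): $r_n(b_n-b)\xrightarrow{D}G=(G^{m_0},0)$ with $G^{m_0}$ absolutely continuous on $\mathbb{R}^{m_0}$; (B2): $\mathbb{P}((\mathrm{P}_{b_n})\text{ has an optimal solution})\to1$. *)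

theory Defs
  imports "HOL-Analysis.Analysis" "HOL-Probability.Probability"
begin

text \<open>Linear programs (P_beta): min c.x s.t. A x = beta, x >= 0, with
  A :: real^'d^'m (m rows indexed by 'm, d columns indexed by 'd).\<close>

definition primal_feasible :: "real^'d^'m \<Rightarrow> real^'m \<Rightarrow> real^'d \<Rightarrow> bool" where
  "primal_feasible A \<beta> x \<longleftrightarrow> A *v x = \<beta> \<and> (\<forall>j. 0 \<le> x $ j)"

definition primal_optimal :: "real^'d^'m \<Rightarrow> real^'d \<Rightarrow> real^'m \<Rightarrow> real^'d \<Rightarrow> bool" where
  "primal_optimal A c \<beta> x \<longleftrightarrow> primal_feasible A \<beta> x \<and>
     (\<forall>y. primal_feasible A \<beta> y \<longrightarrow> c \<bullet> x \<le> c \<bullet> y)"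

definition has_optimal :: "real^'d^'m \<Rightarrow> real^'d \<Rightarrow> real^'m \<Rightarrow> bool" where
  "has_optimal A c \<beta> \<longleftrightarrow> (\<exists>x. primal_optimal A c \<beta> x)"

text \<open>Optimal value c(beta) (a real number; meaningful when (P_beta) has an optimal solution).\<close>
definition opt_value :: "real^'d^'m \<Rightarrow> real^'d \<Rightarrow> real^'m \<Rightarrow> real" where
  "opt_value A c \<beta> = Inf {c \<bullet> x | x. primal_feasible A \<beta> x}"

definition dual_feasible :: "real^'d^'m \<Rightarrow> real^'d \<Rightarrow> real^'m \<Rightarrow> bool" where
  "dual_feasible A c l \<longleftrightarrow> (\<forall>j. (transpose A *v l) $ j \<le> c $ j)"

definition dual_optimal :: "real^'d^'m \<Rightarrow> real^'d \<Rightarrow> real^'m \<Rightarrow> real^'m \<Rightarrow> bool" where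
  "dual_optimal A c \<beta> l \<longleftrightarrow> dual_feasible A c l \<and>
     (\<forall>\<mu>. dual_feasible A c \<mu> \<longrightarrow> \<beta> \<bullet> \<mu> \<le> \<beta> \<bullet> l)"

definition is_basis :: "real^'d^'m \<Rightarrow> 'd set \<Rightarrow> bool" where
  "is_basis A I \<longleftrightarrow> card I = CARD('m) \<and> inj_on (\<lambda>j. column j A) I \<and>
     independent ((\<lambda>j. column j A) ` I)"

definition basic_primal :: "real^'d^'m \<Rightarrow> 'd set \<Rightarrow> real^'m \<Rightarrow> real^'d" where
  "basic_primal A I \<beta> = (THE x. (\<forall>j. j \<notin> I \<longrightarrow> x $ j = 0) \<and> A *v x = \<beta>)"

definition basic_dual :: "real^'d^'m \<Rightarrow> real^'d \<Rightarrow> 'd set \<Rightarrow> real^'m" where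
  "basic_dual A c I = (THE l. \<forall>j\<in>I. (transpose A *v l) $ j = c $ j)"

text \<open>The bases I_1..I_K: dual feasible bases with x(I,b) >= 0.\<close>
definition optimal_bases :: "real^'d^'m \<Rightarrow> real^'m \<Rightarrow> real^'d \<Rightarrow> 'd set set" where
  "optimal_bases A b c = {I. is_basis A I \<and> dual_feasible A c (basic_dual A c I) \<and>
     (\<forall>j. 0 \<le> basic_primal A I b $ j)}"

definition conv_in_distr :: "'a measure \<Rightarrow> (nat \<Rightarrow> 'a \<Rightarrow> 'b::metric_space) \<Rightarrow> 'c measure \<Rightarrow> ('c \<Rightarrow> 'b) \<Rightarrow> bool" where
  "conv_in_distr M X N Y \<longleftrightarrow>
     (\<forall>f::'b \<Rightarrow> real. continuous_on UNIV f \<and> bounded (range f) \<longrightarrow>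
        (\<lambda>n. \<integral>\<omega>. f (X n \<omega>) \<partial>M) \<longlonglongrightarrow> (\<integral>\<omega>. f (Y \<omega>) \<partial>N))"

end

theory Submission
  imports Defs
begin

definition kerfree :: "real^'d^'m \<Rightarrow> 'd set \<Rightarrow> bool" where
  "kerfree A S \<longleftrightarrow> (\<forall>y. (\<forall>j. j \<notin> S \<longrightarrow> y $ j = 0) \<and> A *v y = 0 \<longrightarrow> y = 0)"

lemma mult_sum_supp:
  fixes A :: "real^'d^'m"
  assumes "\<And>j. j \<notin> S \<Longrightarrow> y $ j = 0"
  shows "A *v y = (\<Sum>j\<in>S. y $ j *\<^sub>R column j A)"
proof -
  have "A *v y = (\<Sum>j\<in>UNIV. y $ j *\<^sub>R column j A)"
    by (simp add: matrix_mult_sum scalar_mult_eq_scaleR)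
  also have "\<dots> = (\<Sum>j\<in>S. y $ j *\<^sub>R column j A)"
    by (rule sum.mono_neutral_right) (auto simp: assms)
  finally show ?thesis .
qed

lemma transpose_comp: "(transpose A *v l) $ j = column j A \<bullet> (l::real^'m)"
  for A :: "real^'d^'m"
  by (simp add: matrix_vector_mult_def transpose_def column_def inner_vec_def mult.commute)

lemma inner_transpose: "l \<bullet> (A *v x) = (transpose A *v l) \<bullet> (x::real^'d)"
  for A :: "real^'d^'m"
  by (metis dot_lmul_matrix transpose_transpose vector_transpose_matrix)

lemma kerfree_basis:
  fixes A :: "real^'d^'m"
  shows "is_basis A I \<longleftrightarrow> card I = CARD('m) \<and> kerfree A I"
proof
  assume b: "is_basis A I"
  then have card: "card I = CARD('m)" and inj: "inj_on (\<lambda>j. column j A) I"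
    and ind: "independent ((\<lambda>j. column j A) ` I)" by (auto simp: is_basis_def)
  have "kerfree A I"
    unfolding kerfree_def
  proof (intro allI impI)
    fix y :: "real^'d" assume h: "(\<forall>j. j \<notin> I \<longrightarrow> y $ j = 0) \<and> A *v y = 0"
    define u where "u v = y $ (inv_into I (\<lambda>j. column j A) v)" for v
    have "(\<Sum>v\<in>(\<lambda>j. column j A) ` I. u v *\<^sub>R v) = (\<Sum>j\<in>I. u (column j A) *\<^sub>R column j A)"
      by (rule sum.reindex[OF inj, unfolded comp_def])
    also have "\<dots> = (\<Sum>j\<in>I. y $ j *\<^sub>R column j A)"
      by (rule sum.cong) (auto simp: u_def inv_into_f_f[OF inj])
    also have "\<dots> = A *v y" using h mult_sum_supp[of I y A] by auto
    finally have z: "(\<Sum>v\<in>(\<lambda>j. column j A) ` I. u v *\<^sub>R v) = 0" using h by simp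
    show "y = 0"
    proof (rule iffD2[OF vec_eq_iff], rule allI)
      fix j show "y $ j = 0 $ j"
      proof (cases "j \<in> I")
        case True
        have "u (column j A) = 0"
          using ind z True unfolding independent_explicit by auto
        then show ?thesis using True by (simp add: u_def inv_into_f_f[OF inj])
      qed (use h in auto)
    qed
  qed
  then show "card I = CARD('m) \<and> kerfree A I" using card by simp
next
  assume h: "card I = CARD('m) \<and> kerfree A I"
  have fin: "finite I" by simp
  have inj: "inj_on (\<lambda>j. column j A) I"
  proof (rule inj_onI, rule ccontr)
    fix i j assume ij: "i \<in> I" "j \<in> I" "column i A = column j A" "i \<noteq> j"
    define y :: "real^'d" where "y = axis i 1 - axis j 1"
    have "A *v y = 0" using ij by (simp add: y_def matrix_vector_mult_diff_distrib matrix_vector_mult_basis)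
    moreover have "\<forall>k. k \<notin> I \<longrightarrow> y $ k = 0" using ij by (auto simp: y_def axis_def)
    ultimately have "y = 0" using h by (auto simp: kerfree_def)
    moreover have "y $ i = 1" using ij by (simp add: y_def axis_def)
    ultimately show False by simp
  qed
  have "independent ((\<lambda>j. column j A) ` I)"
    unfolding independent_explicit
  proof (intro conjI allI impI ballI)
    show "finite ((\<lambda>j. column j A) ` I)" by simp
    fix u v assume z: "(\<Sum>v\<in>(\<lambda>j. column j A) ` I. u v *\<^sub>R v) = 0" and v: "v \<in> (\<lambda>j. column j A) ` I"
    define y :: "real^'d" where "y = (\<chi> j. if j \<in> I then u (column j A) else 0)"
    have "A *v y = (\<Sum>j\<in>I. y $ j *\<^sub>R column j A)" by (rule mult_sum_supp) (simp add: y_def)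
    also have "\<dots> = (\<Sum>j\<in>I. u (column j A) *\<^sub>R column j A)" by (rule sum.cong) (auto simp: y_def)
    also have "\<dots> = (\<Sum>v\<in>(\<lambda>j. column j A) ` I. u v *\<^sub>R v)"
      by (rule sum.reindex[OF inj, unfolded comp_def, symmetric])
    finally have "A *v y = 0" using z by simp
    then have "y = 0" using h by (auto simp: kerfree_def y_def)
    then show "u v = 0"
    proof -
      assume y0: "y = 0"
      obtain j where j: "j \<in> I" "v = column j A" using v by blast
      have "y $ j = 0" using y0 by simp
      then show ?thesis using j by (simp add: y_def)
    qed
  qed
  then show "is_basis A I" using h inj by (simp add: is_basis_def)
qed

lemma vstar_comp[simp]: "(l v* A) $ j = column j A \<bullet> (l::real^'m)"
  for A :: "real^'d^'m"
  by (metis transpose_comp transpose_transpose vector_transpose_matrix)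

lemma lin_rep: "linear (g::real^'m\<Rightarrow>real) \<Longrightarrow> g x = (\<chi> i. g (axis i 1)) \<bullet> x"
proof -
  assume g: "linear g"
  have "g x = g (\<Sum>i\<in>UNIV. x$i *\<^sub>R axis i 1)" using basis_expansion[of x] by (simp add: scalar_mult_eq_scaleR)
  also have "\<dots> = (\<Sum>i\<in>UNIV. x$i * g (axis i 1))" by (simp add: linear_sum[OF g] linear_scale[OF g])
  also have "\<dots> = (\<chi> i. g (axis i 1)) \<bullet> x" by (simp add: inner_vec_def mult.commute)
  finally show ?thesis .
qed

lemma kerfree_indep:
  fixes A :: "real^'d^'m"
  assumes h: "kerfree A I"
  shows "inj_on (\<lambda>j. column j A) I" "independent ((\<lambda>j. column j A) ` I)"
proof -
  show inj: "inj_on (\<lambda>j. column j A) I"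
  proof (rule inj_onI, rule ccontr)
    fix i j assume ij: "i \<in> I" "j \<in> I" "column i A = column j A" "i \<noteq> j"
    define y :: "real^'d" where "y = axis i 1 - axis j 1"
    have "A *v y = 0" using ij by (simp add: y_def matrix_vector_mult_diff_distrib matrix_vector_mult_basis)
    moreover have "\<forall>k. k \<notin> I \<longrightarrow> y $ k = 0" using ij by (auto simp: y_def axis_def)
    ultimately have "y = 0" using h by (auto simp: kerfree_def)
    moreover have "y $ i = 1" using ij by (simp add: y_def axis_def)
    ultimately show False by simp
  qed
  show "independent ((\<lambda>j. column j A) ` I)"
    unfolding independent_explicit
  proof (intro conjI allI impI ballI)
    show "finite ((\<lambda>j. column j A) ` I)" by simp
    fix u v assume z: "(\<Sum>v\<in>(\<lambda>j. column j A) ` I. u v *\<^sub>R v) = 0" and v: "v \<in> (\<lambda>j. column j A) ` I"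
    define y :: "real^'d" where "y = (\<chi> j. if j \<in> I then u (column j A) else 0)"
    have "A *v y = (\<Sum>j\<in>I. y $ j *\<^sub>R column j A)" by (rule mult_sum_supp) (simp add: y_def)
    also have "\<dots> = (\<Sum>j\<in>I. u (column j A) *\<^sub>R column j A)" by (rule sum.cong) (auto simp: y_def)
    also have "\<dots> = (\<Sum>v\<in>(\<lambda>j. column j A) ` I. u v *\<^sub>R v)"
      by (rule sum.reindex[OF inj, unfolded comp_def, symmetric])
    finally have "A *v y = 0" using z by simp
    then have "y = 0" using h by (auto simp: kerfree_def y_def)
    then show "u v = 0"
    proof -
      assume y0: "y = 0"
      obtain j where j: "j \<in> I" "v = column j A" using v by blast
      have "y $ j = 0" using y0 by simp
      then show ?thesis using j by (simp add: y_def)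
    qed
  qed
qed

lemma kerfree_card:
  fixes A :: "real^'d^'m"
  assumes "kerfree A I" shows "card I \<le> CARD('m)"
proof -
  have "card I = card ((\<lambda>j. column j A) ` I)" using kerfree_indep[OF assms] by (simp add: card_image)
  also have "\<dots> \<le> DIM(real^'m)" using independent_bound kerfree_indep[OF assms] by blast
  finally show ?thesis by simp
qed

lemma basis_span:
  fixes A :: "real^'d^'m"
  assumes "is_basis A J" shows "span ((\<lambda>j. column j A) ` J) = UNIV"
proof -
  have ind: "independent ((\<lambda>j. column j A) ` J)" and inj: "inj_on (\<lambda>j. column j A) J"
    and c: "card J = CARD('m)" using assms by (auto simp: is_basis_def)
  have "dim ((\<lambda>j. column j A) ` J) = card ((\<lambda>j. column j A) ` J)"
    using ind dim_eq_card_independent by blast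
  also have "\<dots> = DIM(real^'m)" using c inj by (simp add: card_image)
  finally show ?thesis using dim_eq_full[of "(\<lambda>j. column j A) ` J"] by simp
qed

lemma basic_primal_ex:
  fixes A :: "real^'d^'m"
  assumes "is_basis A J"
  shows "\<exists>x. (\<forall>j. j \<notin> J \<longrightarrow> x $ j = 0) \<and> A *v x = \<beta>"
proof -
  have inj: "inj_on (\<lambda>j. column j A) J" using assms by (auto simp: is_basis_def)
  have "\<beta> \<in> span ((\<lambda>j. column j A) ` J)" using basis_span[OF assms] by simp
  then obtain u where u: "\<beta> = (\<Sum>v\<in>(\<lambda>j. column j A) ` J. u v *\<^sub>R v)"
    using span_finite[of "(\<lambda>j. column j A) ` J"] by (auto simp: scalar_mult_eq_scaleR)
  define x :: "real^'d" where "x = (\<chi> j. if j \<in> J then u (column j A) else 0)"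
  have "A *v x = (\<Sum>j\<in>J. x $ j *\<^sub>R column j A)" by (rule mult_sum_supp) (simp add: x_def)
  also have "\<dots> = (\<Sum>j\<in>J. u (column j A) *\<^sub>R column j A)" by (rule sum.cong) (auto simp: x_def)
  also have "\<dots> = \<beta>" unfolding u by (rule sum.reindex[OF inj, unfolded comp_def, symmetric])
  finally show ?thesis by (intro exI[of _ x]) (auto simp: x_def)
qed

lemma basic_primal_eq:
  fixes A :: "real^'d^'m"
  assumes "is_basis A J" "\<forall>j. j \<notin> J \<longrightarrow> x $ j = 0" "A *v x = \<beta>"
  shows "basic_primal A J \<beta> = x"
  unfolding basic_primal_def
proof (rule the_equality)
  show "(\<forall>j. j \<notin> J \<longrightarrow> x $ j = 0) \<and> A *v x = \<beta>" using assms by simp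
  fix y assume y: "(\<forall>j. j \<notin> J \<longrightarrow> y $ j = 0) \<and> A *v y = \<beta>"
  have kf: "kerfree A J" using assms(1) kerfree_basis by blast
  have "A *v (y - x) = 0" using y assms by (simp add: matrix_vector_mult_diff_distrib)
  moreover have "\<forall>j. j \<notin> J \<longrightarrow> (y - x) $ j = 0" using y assms by simp
  ultimately have "y - x = 0" using kf unfolding kerfree_def by blast
  then show "y = x" by simp
qed

lemma basic_primal:
  fixes A :: "real^'d^'m"
  assumes "is_basis A J"
  shows "\<forall>j. j \<notin> J \<longrightarrow> basic_primal A J \<beta> $ j = 0" "A *v basic_primal A J \<beta> = \<beta>"
proof -
  obtain x where x: "\<forall>j. j \<notin> J \<longrightarrow> x $ j = 0" "A *v x = \<beta>" using basic_primal_ex[OF assms, of \<beta>] by blast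
  have e: "basic_primal A J \<beta> = x" using basic_primal_eq[OF assms x] .
  show "\<forall>j. j \<notin> J \<longrightarrow> basic_primal A J \<beta> $ j = 0" "A *v basic_primal A J \<beta> = \<beta>" using x unfolding e by auto
qed

lemma basic_dual_eq:
  fixes A :: "real^'d^'m"
  assumes "is_basis A J" "\<forall>j\<in>J. (transpose A *v l) $ j = c $ j"
  shows "basic_dual A c J = l"
  unfolding basic_dual_def
proof (rule the_equality)
  show "\<forall>j\<in>J. (transpose A *v l) $ j = c $ j" by fact
  fix l' assume l': "\<forall>j\<in>J. (transpose A *v l') $ j = c $ j"
  have o: "orthogonal (l' - l) v" if vJ: "v \<in> (\<lambda>j. column j A) ` J" for v
  proof -
    obtain j where j: "j \<in> J" "v = column j A" using vJ by blast
    have "(transpose A *v l') $ j = c $ j" "(transpose A *v l) $ j = c $ j" using j l' assms(2) by auto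
    then have "column j A \<bullet> l' = column j A \<bullet> l" by (simp only: transpose_comp)
    then show ?thesis using j by (simp add: orthogonal_def inner_diff_right inner_commute)
  qed
  have "orthogonal (l' - l) (l' - l)"
    by (rule orthogonal_to_span[of "l' - l" "(\<lambda>j. column j A) ` J"]) (auto simp: basis_span[OF assms(1)] intro: o)
  then show "l' = l" by (simp add: orthogonal_def)
qed

lemma basic_dual_ex:
  fixes A :: "real^'d^'m"
  assumes "is_basis A J"
  shows "\<exists>l. \<forall>j\<in>J. (transpose A *v l) $ j = c $ j"
proof -
  have inj: "inj_on (\<lambda>j. column j A) J" and ind: "independent ((\<lambda>j. column j A) ` J)"
    using assms by (auto simp: is_basis_def)
  from linear_independent_extend[OF ind, of "\<lambda>v. c $ (inv_into J (\<lambda>j. column j A) v)"]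
  obtain g :: "real^'m \<Rightarrow> real" where g: "linear g"
    "\<forall>v\<in>(\<lambda>j. column j A) ` J. g v = c $ (inv_into J (\<lambda>j. column j A) v)"
    by (elim exE conjE) (rule that)
  show ?thesis
  proof (intro exI ballI)
    fix j assume j: "j \<in> J"
    have "g (column j A) = c $ j" using g(2) j inv_into_f_f[OF inj j] by auto
    then show "(transpose A *v (\<chi> i. g (axis i 1))) $ j = c $ j"
      using lin_rep[OF g(1), of "column j A"] unfolding transpose_comp by (simp add: inner_commute)
  qed
qed

lemma basic_dual:
  fixes A :: "real^'d^'m"
  assumes "is_basis A J"
  shows "\<forall>j\<in>J. (transpose A *v basic_dual A c J) $ j = c $ j"
proof -
  obtain l where l: "\<forall>j\<in>J. (transpose A *v l) $ j = c $ j" using basic_dual_ex[OF assms, of c] by blast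
  show ?thesis using l unfolding basic_dual_eq[OF assms l] .
qed

lemma dual_feasible_iff: "dual_feasible A c l \<longleftrightarrow> (\<forall>j. column j A \<bullet> l \<le> c $ j)"
  for A :: "real^'d^'m"
  unfolding dual_feasible_def transpose_comp ..

lemma ratio_test:
  fixes a s :: "'d \<Rightarrow> real"
  assumes "finite P" "P \<noteq> {}" "\<forall>j\<in>P. 0 < a j" "\<forall>j\<in>P. 0 \<le> s j"
  obtains k where "k \<in> P" "0 \<le> s k / a k" "\<forall>j\<in>P. (s k / a k) * a j \<le> s j"
proof -
  define m where "m = Min ((\<lambda>j. s j / a j) ` P)"
  have "m \<in> (\<lambda>j. s j / a j) ` P" using assms Min_in by (simp add: m_def)
  then obtain k where k: "k \<in> P" "m = s k / a k" by blast
  have le: "\<forall>j\<in>P. m \<le> s j / a j" using assms by (simp add: m_def)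
  show thesis
  proof (rule that[OF k(1)])
    have "0 < a k" "0 \<le> s k" using assms k by auto
    then show "0 \<le> s k / a k" by simp
    show "\<forall>j\<in>P. s k / a k * a j \<le> s j"
      using le k assms(3) by (simp add: pos_le_divide_eq)
  qed
qed

lemma reduce_support:
  fixes A :: "real^'d^'m"
  assumes "\<forall>j. 0 \<le> x $ j" "A *v x = \<beta>" "\<forall>j. j \<notin> T \<longrightarrow> x $ j = 0"
  obtains x' where "\<forall>j. 0 \<le> x' $ j" "A *v x' = \<beta>" "\<forall>j. j \<notin> T \<longrightarrow> x' $ j = 0"
    "kerfree A {j. x' $ j \<noteq> 0}"
proof -
  define P where "P x \<longleftrightarrow> (\<forall>j. 0 \<le> x $ j) \<and> A *v x = \<beta> \<and> (\<forall>j. j \<notin> T \<longrightarrow> x $ j = 0)" for x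
  obtain x0 where x0: "P x0" and min: "\<forall>y. P y \<longrightarrow> card {j. x0 $ j \<noteq> 0} \<le> card {j. y $ j \<noteq> 0}"
    using ex_has_least_nat[of P x "\<lambda>y. card {j. y $ j \<noteq> 0}"] assms by (auto simp: P_def)
  define S where "S = {j. x0 $ j \<noteq> 0}"
  have "kerfree A S"
  proof (rule ccontr)
    assume "\<not> kerfree A S"
    then obtain y where y: "\<forall>j. j \<notin> S \<longrightarrow> y $ j = 0" "A *v y = 0" "y \<noteq> 0"
      unfolding kerfree_def by blast
    obtain i where i: "y $ i \<noteq> 0" using y(3) by (auto simp: vec_eq_iff)
    obtain z where z: "\<forall>j. j \<notin> S \<longrightarrow> z $ j = 0" "A *v z = 0" "\<exists>j. z $ j > 0"
    proof (cases "y $ i > 0")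
      case True then show ?thesis using y by (intro that[of y]) auto
    next
      case False then have "(-y) $ i > 0" using i by simp
      then show ?thesis using y by (intro that[of "-y"]) (auto simp: matrix_vector_mult_diff_distrib[of A 0 y, simplified])
    qed
    define Q where "Q = {j. z $ j > 0}"
    have Q: "finite Q" "Q \<noteq> {}" "\<forall>j\<in>Q. 0 < z $ j" "\<forall>j\<in>Q. 0 \<le> x0 $ j"
      using z x0 by (auto simp: Q_def P_def)
    obtain k where k: "k \<in> Q" "0 \<le> x0 $ k / z $ k" "\<forall>j\<in>Q. (x0 $ k / z $ k) * z $ j \<le> x0 $ j"
      using ratio_test[OF Q] by blast
    define t where "t = x0 $ k / z $ k"
    define x1 where "x1 = x0 - t *\<^sub>R z"
    have "P x1"
      unfolding P_def
    proof (intro conjI allI impI)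
      fix j show "0 \<le> x1 $ j"
      proof (cases "j \<in> Q")
        case True then show ?thesis using k by (simp add: x1_def t_def)
      next
        case False then have "z $ j \<le> 0" by (simp add: Q_def)
        moreover have "0 \<le> x0 $ j" using x0 by (simp add: P_def)
        moreover have "t * z $ j \<le> 0" using k(2) \<open>z $ j \<le> 0\<close> unfolding t_def by (rule mult_nonneg_nonpos)
        ultimately show ?thesis by (simp add: x1_def)
      qed
      show "A *v x1 = \<beta>" using x0 z by (simp add: x1_def P_def matrix_vector_mult_diff_distrib matrix_vector_mult_scaleR)
      fix j assume "j \<notin> T"
      then have "x0 $ j = 0" using x0 by (simp add: P_def)
      then have "j \<notin> S" by (simp add: S_def)
      then show "x1 $ j = 0" using z \<open>x0 $ j = 0\<close> by (simp add: x1_def)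
    qed
    have kS: "k \<in> S" using k(1) z(1) by (auto simp: Q_def)
    have "{j. x1 $ j \<noteq> 0} \<subseteq> S - {k}"
    proof
      fix j assume j: "j \<in> {j. x1 $ j \<noteq> 0}"
      have "j \<in> S"
      proof (rule ccontr)
        assume "j \<notin> S" then show False using j z(1) by (simp add: x1_def S_def)
      qed
      moreover have "j \<noteq> k"
      proof
        assume "j = k"
        have "z $ k > 0" using k(1) by (simp add: Q_def)
        then have "x1 $ k = 0" by (simp add: x1_def t_def)
        then show False using j \<open>j = k\<close> by simp
      qed
      ultimately show "j \<in> S - {k}" by simp
    qed
    then have "card {j. x1 $ j \<noteq> 0} \<le> card (S - {k})" by (intro card_mono) auto
    also have "\<dots> < card S" using kS by (intro card_Diff1_less) auto
    finally show False using min \<open>P x1\<close> by (fastforce simp: S_def)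
  qed
  then show thesis using x0 by (intro that[of x0]) (auto simp: P_def S_def)
qed

lemma extend_basis:
  fixes A :: "real^'d^'m"
  assumes "kerfree A S" "S \<subseteq> T" "dim ((\<lambda>j. column j A) ` T) = CARD('m)"
  obtains J where "is_basis A J" "S \<subseteq> J" "J \<subseteq> T"
proof -
  define Q where "Q J \<longleftrightarrow> kerfree A J \<and> S \<subseteq> J \<and> J \<subseteq> T" for J
  have bnd: "\<forall>K. Q K \<longrightarrow> card K < CARD('d) + 1"
    by (auto simp: Q_def le_imp_less_Suc card_mono)
  obtain J where J: "Q J" and max: "\<forall>K. Q K \<longrightarrow> card K \<le> card J"
    using ex_has_greatest_nat[of Q S card "CARD('d)+1"] assms bnd by (auto simp: Q_def)
  have "card J = CARD('m)"
  proof (rule ccontr)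
    assume "card J \<noteq> CARD('m)"
    then have lt: "card J < CARD('m)" using kerfree_card[of A J] J by (auto simp: Q_def)
    have "\<exists>t\<in>T. column t A \<notin> span ((\<lambda>j. column j A) ` J)"
    proof (rule ccontr)
      assume "\<not> ?thesis"
      then have "(\<lambda>j. column j A) ` T \<subseteq> span ((\<lambda>j. column j A) ` J)" by auto
      then have "dim ((\<lambda>j. column j A) ` T) \<le> card ((\<lambda>j. column j A) ` J)"
        by (intro dim_le_card) auto
      also have "\<dots> \<le> card J" by (rule card_image_le) simp
      finally show False using lt assms(3) by simp
    qed
    then obtain t where t: "t \<in> T" "column t A \<notin> span ((\<lambda>j. column j A) ` J)" by blast
    have tJ: "t \<notin> J" using t(2) by (auto intro: span_base)
    have "kerfree A (insert t J)"
      unfolding kerfree_def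
    proof (intro allI impI)
      fix y :: "real^'d" assume y: "(\<forall>j. j \<notin> insert t J \<longrightarrow> y $ j = 0) \<and> A *v y = 0"
      have "A *v y = (\<Sum>j\<in>insert t J. y $ j *\<^sub>R column j A)" by (rule mult_sum_supp) (use y in auto)
      also have "\<dots> = y $ t *\<^sub>R column t A + (\<Sum>j\<in>J. y $ j *\<^sub>R column j A)"
        using tJ by (simp add: sum.insert)
      finally have eq: "y $ t *\<^sub>R column t A + (\<Sum>j\<in>J. y $ j *\<^sub>R column j A) = 0" using y by simp
      have yt: "y $ t = 0"
      proof (rule ccontr)
        assume nz: "y $ t \<noteq> 0"
        have e2: "y $ t *\<^sub>R column t A = - (\<Sum>j\<in>J. y $ j *\<^sub>R column j A)"
          using eq by (simp add: eq_neg_iff_add_eq_0)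
        have "- (\<Sum>j\<in>J. y $ j *\<^sub>R column j A) \<in> span ((\<lambda>j. column j A) ` J)"
          by (intro span_neg span_sum span_scale) (auto intro: span_base)
        then have "inverse (y $ t) *\<^sub>R (y $ t *\<^sub>R column t A) \<in> span ((\<lambda>j. column j A) ` J)"
          unfolding e2 by (rule span_scale)
        then show False using t(2) nz by simp
      qed
      then have "\<forall>j. j \<notin> J \<longrightarrow> y $ j = 0" using y by auto
      then show "y = 0" using J y by (auto simp: Q_def kerfree_def)
    qed
    then have "Q (insert t J)" using J t by (auto simp: Q_def)
    then have "card (insert t J) \<le> card J" using max by blast
    then show False using tJ by simp
  qed
  then show thesis using J by (intro that[of J]) (auto simp: Q_def kerfree_basis)
qed

definition orth :: "(real^'d) set" where "orth = {x. \<forall>j. 0 \<le> x $ j}"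

lemma Ax_inner: "(A *v x) \<bullet> l = (\<Sum>j\<in>UNIV. x $ j * (column j A \<bullet> l))"
  for A :: "real^'d^'m"
  by (simp add: matrix_mult_sum scalar_mult_eq_scaleR inner_sum_left)

lemma weak_duality:
  fixes A :: "real^'d^'m"
  assumes "primal_feasible A \<beta> x" "dual_feasible A c l"
  shows "\<beta> \<bullet> l \<le> c \<bullet> x"
proof -
  have "\<beta> \<bullet> l = (\<Sum>j\<in>UNIV. x $ j * (column j A \<bullet> l))"
    using assms(1) by (simp add: primal_feasible_def Ax_inner[symmetric])
  also have "\<dots> \<le> (\<Sum>j\<in>UNIV. x $ j * c $ j)"
    using assms by (intro sum_mono mult_left_mono) (auto simp: primal_feasible_def dual_feasible_iff)
  also have "\<dots> = c \<bullet> x" by (simp add: inner_vec_def mult.commute)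
  finally show ?thesis .
qed

lemma opt_value_eq:
  fixes A :: "real^'d^'m"
  assumes "primal_optimal A c \<beta> x"
  shows "opt_value A c \<beta> = c \<bullet> x"
  unfolding opt_value_def
  by (rule cInf_eq_minimum) (use assms in \<open>auto simp: primal_optimal_def\<close>)

lemma conv_sum_hull:
  assumes "finite F" "\<forall>i\<in>F. 0 \<le> a i \<and> v i \<in> convex_cone hull S"
  shows "(\<Sum>i\<in>F. a i *\<^sub>R v i) \<in> convex_cone hull S"
  using assms
proof (induction F rule: finite_induct)
  case empty then show ?case by (simp add: convex_cone_hull_contains_0)
next
  case (insert x F) then show ?case
    by (simp add: convex_cone_hull_add convex_cone_hull_mul)
qed

lemma orth_image_hull:
  fixes L :: "real^'d \<Rightarrow> 'b::euclidean_space"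
  assumes "linear L"
  shows "L ` orth = convex_cone hull (range (\<lambda>j. L (axis j 1)))"
proof
  show "L ` orth \<subseteq> convex_cone hull (range (\<lambda>j. L (axis j 1)))"
  proof
    fix y assume "y \<in> L ` orth"
    then obtain x where x: "x \<in> orth" "y = L x" by blast
    have "L x = L (\<Sum>j\<in>UNIV. x $ j *\<^sub>R axis j 1)" using basis_expansion[of x] by (simp add: scalar_mult_eq_scaleR)
    also have "\<dots> = (\<Sum>j\<in>UNIV. x $ j *\<^sub>R L (axis j 1))" by (simp add: linear_sum[OF assms] linear_scale[OF assms])
    also have "\<dots> \<in> convex_cone hull (range (\<lambda>j. L (axis j 1)))"
      using x(1) by (intro conv_sum_hull) (auto simp: orth_def intro: hull_inc)
    finally show "y \<in> convex_cone hull (range (\<lambda>j. L (axis j 1)))" using x by simp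
  qed
  have cc: "convex_cone (orth :: (real^'d) set)"
    by (auto simp: convex_cone_iff orth_def)
  show "convex_cone hull (range (\<lambda>j. L (axis j 1))) \<subseteq> L ` orth"
  proof (rule hull_minimal)
    show "range (\<lambda>j. L (axis j 1)) \<subseteq> L ` orth" by (auto simp: orth_def axis_def)
    show "convex_cone (L ` orth)" using cc assms by (intro convex_cone_linear_image) simp
  qed
qed

lemma closed_orth_image:
  fixes L :: "real^'d \<Rightarrow> 'b::euclidean_space"
  assumes "linear L"
  shows "closed (L ` orth)"
  unfolding orth_image_hull[OF assms] by (rule closed_convex_cone_hull) simp

lemma linear_pair: "linear (\<lambda>x::real^'d. (A *v x, c \<bullet> x))" for A :: "real^'d^'m"
  by (rule linearI) (simp_all add: algebra_simps inner_add_right matrix_vector_right_distrib)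

lemma farkas_approx:
  fixes A :: "real^'d^'m"
  assumes opt: "primal_optimal A c \<beta> xs" and t0: "t0 < c \<bullet> xs"
  shows "\<exists>l. dual_feasible A c l \<and> t0 < \<beta> \<bullet> l"
proof -
  define L where "L = (\<lambda>x::real^'d. (A *v x, c \<bullet> x))"
  have lin: "linear L" unfolding L_def by (rule linear_pair)
  have cl: "closed (L ` orth)" by (rule closed_orth_image[OF lin])
  have cv: "convex (L ` orth)"
    by (rule convex_linear_image[OF lin]) (auto simp: convex_def orth_def)
  have notin: "(\<beta>, t0) \<notin> L ` orth"
  proof
    assume "(\<beta>, t0) \<in> L ` orth"
    then obtain x where x: "x \<in> orth" "A *v x = \<beta>" "c \<bullet> x = t0" by (auto simp: L_def)
    then have "primal_feasible A \<beta> x" by (simp add: primal_feasible_def orth_def)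
    then have "c \<bullet> xs \<le> c \<bullet> x" using opt by (simp add: primal_optimal_def)
    then show False using x t0 by simp
  qed
  obtain a b0 where ab: "a \<bullet> (\<beta>, t0) < b0" "\<forall>k\<in>L ` orth. b0 < a \<bullet> k"
    using separating_hyperplane_closed_point[OF cv cl notin] by blast
  obtain w \<tau> where a: "a = (w, \<tau>)" by (cases a)
  have "0 \<in> orth" by (simp add: orth_def)
  then have "b0 < a \<bullet> L 0" using ab(2) by blast
  then have b0: "b0 < 0" by (simp add: L_def a)
  have nn: "0 \<le> a \<bullet> L x" if x: "x \<in> orth" for x
  proof (rule ccontr)
    assume neg: "\<not> 0 \<le> a \<bullet> L x"
    define s where "s = b0 / (a \<bullet> L x)"
    have s: "0 \<le> s" using neg b0 by (simp add: s_def divide_nonpos_neg)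
    have "s *\<^sub>R x \<in> orth" using x s by (simp add: orth_def)
    then have "b0 < a \<bullet> L (s *\<^sub>R x)" using ab(2) by blast
    also have "\<dots> = s * (a \<bullet> L x)" by (simp add: linear_scale[OF lin])
    also have "\<dots> = b0" using neg by (simp add: s_def)
    finally show False by simp
  qed
  have col: "0 \<le> w \<bullet> column j A + \<tau> * c $ j" for j
  proof -
    have "axis j 1 \<in> orth" by (simp add: orth_def axis_def)
    from nn[OF this] show ?thesis
      by (simp add: a L_def matrix_vector_mult_basis inner_axis inner_commute)
  qed
  have "xs \<in> orth" using opt by (simp add: primal_optimal_def primal_feasible_def orth_def)
  from nn[OF this] have h1: "0 \<le> w \<bullet> \<beta> + \<tau> * (c \<bullet> xs)"
    using opt by (simp add: a L_def primal_optimal_def primal_feasible_def)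
  have h2: "w \<bullet> \<beta> + \<tau> * t0 < 0" using ab(1) b0 by (simp add: a)
  have "\<tau> * (c \<bullet> xs - t0) > 0" using h1 h2 by (simp add: algebra_simps)
  then have tau: "\<tau> > 0" using t0 by (simp add: zero_less_mult_iff)
  define l where "l = (- (1 / \<tau>)) *\<^sub>R w"
  have "dual_feasible A c l"
    unfolding dual_feasible_iff
  proof
    fix j
    have "- (w \<bullet> column j A) \<le> \<tau> * c $ j" using col[of j] by simp
    then have "- (w \<bullet> column j A) / \<tau> \<le> \<tau> * c $ j / \<tau>" using tau by (intro divide_right_mono) auto
    then have "- (w \<bullet> column j A) / \<tau> \<le> c $ j" using tau by simp
    then show "column j A \<bullet> l \<le> c $ j" by (simp add: l_def inner_commute)
  qed
  moreover have "t0 < \<beta> \<bullet> l"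
  proof -
    have "\<tau> * t0 < - (w \<bullet> \<beta>)" using h2 by simp
    then have "\<tau> * t0 / \<tau> < - (w \<bullet> \<beta>) / \<tau>" using tau by (intro divide_strict_right_mono) auto
    then have "t0 < - (w \<bullet> \<beta>) / \<tau>" using tau by simp
    then show ?thesis by (simp add: l_def inner_commute)
  qed
  ultimately show ?thesis by blast
qed

lemma primal_attain:
  fixes A :: "real^'d^'m"
  assumes feas: "primal_feasible A \<beta> x0" and df: "dual_feasible A c l0"
  shows "\<exists>x. primal_optimal A c \<beta> x"
proof -
  define V where "V = {c \<bullet> x | x. primal_feasible A \<beta> x}"
  define v where "v = Inf V"
  have ne: "V \<noteq> {}" using feas by (auto simp: V_def)
  have bdd: "bdd_below V" using weak_duality[OF _ df] by (auto simp: V_def bdd_below_def)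
  define L where "L = (\<lambda>x::real^'d. (A *v x, c \<bullet> x))"
  have lin: "linear L" unfolding L_def by (rule linear_pair)
  have cl: "closed (L ` orth)" by (rule closed_orth_image[OF lin])
  have "(\<beta>, v) \<in> closure (L ` orth)"
    unfolding closure_approachable
  proof (intro allI impI)
    fix e :: real assume e: "e > 0"
    have "Inf V < v + e" using e by (simp add: v_def)
    then obtain y where y: "y \<in> V" "y < v + e" using cInf_less_iff[OF ne bdd] by blast
    then obtain x where x: "primal_feasible A \<beta> x" "y = c \<bullet> x" by (auto simp: V_def)
    have "v \<le> y" using y(1) bdd by (simp add: v_def cInf_lower)
    have "L x \<in> L ` orth" using x(1) by (auto simp: primal_feasible_def orth_def)
    moreover have "dist (L x) (\<beta>, v) < e"
      using x y \<open>v \<le> y\<close> by (simp add: L_def dist_Pair_Pair primal_feasible_def dist_real_def)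
    ultimately show "\<exists>y\<in>L ` orth. dist y (\<beta>, v) < e" by blast
  qed
  then have "(\<beta>, v) \<in> L ` orth" using cl by simp
  then obtain x where x: "x \<in> orth" "A *v x = \<beta>" "c \<bullet> x = v" by (auto simp: L_def)
  have "primal_optimal A c \<beta> x"
    unfolding primal_optimal_def
  proof (intro conjI allI impI)
    show "primal_feasible A \<beta> x" using x by (simp add: primal_feasible_def orth_def)
    fix y assume "primal_feasible A \<beta> y"
    then have "c \<bullet> y \<in> V" by (auto simp: V_def)
    then show "c \<bullet> x \<le> c \<bullet> y" using x bdd by (simp add: v_def cInf_lower)
  qed
  then show ?thesis by blast
qed

lemma transpose_inj:
  fixes A :: "real^'d^'m"
  assumes full: "rank A = CARD('m)" and u: "u \<noteq> 0"
  shows "\<exists>j. column j A \<bullet> u \<noteq> 0"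
proof (rule ccontr)
  assume "\<not> ?thesis"
  then have "transpose A *v u = 0" by (simp add: vec_eq_iff transpose_comp)
  moreover have "inj ((*v) (transpose A))" using full rank_transpose[of A] full_rank_injective by metis
  ultimately show False using u by (metis injD matrix_vector_mult_0_right)
qed

lemma dual_vertex:
  fixes A :: "real^'d^'m"
  assumes full: "rank A = CARD('m)" and feas: "dual_feasible A c l"
    and rec: "\<forall>u. (\<forall>j. column j A \<bullet> u \<le> 0) \<longrightarrow> \<beta> \<bullet> u \<le> 0"
  obtains l' where "dual_feasible A c l'" "\<beta> \<bullet> l \<le> \<beta> \<bullet> l'"
    "dim ((\<lambda>j. column j A) ` {j. column j A \<bullet> l' = c $ j}) = CARD('m)"
proof -
  define tt where "tt l' = {j. column j A \<bullet> l' = c $ j}" for l'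
  define Q where "Q l' \<longleftrightarrow> dual_feasible A c l' \<and> \<beta> \<bullet> l \<le> \<beta> \<bullet> l'" for l'
  have bnd: "\<forall>K. Q K \<longrightarrow> card (tt K) < CARD('d) + 1"
    by (auto simp: le_imp_less_Suc card_mono)
  obtain l0 where l0: "Q l0" and max: "\<forall>K. Q K \<longrightarrow> card (tt K) \<le> card (tt l0)"
    using ex_has_greatest_nat[of Q l "\<lambda>K. card (tt K)" "CARD('d)+1"] feas bnd by (auto simp: Q_def)
  have "dim ((\<lambda>j. column j A) ` tt l0) = CARD('m)"
  proof (rule ccontr)
    assume ne: "dim ((\<lambda>j. column j A) ` tt l0) \<noteq> CARD('m)"
    have "dim ((\<lambda>j. column j A) ` tt l0) \<le> DIM(real^'m)" by (rule dim_subset_UNIV)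
    then have dl: "dim ((\<lambda>j. column j A) ` tt l0) < DIM(real^'m)" using ne by simp
    obtain u :: "real^'m" where u: "u \<noteq> 0" "\<And>y. y \<in> span ((\<lambda>j. column j A) ` tt l0) \<Longrightarrow> orthogonal u y"
      using orthogonal_to_subspace_exists[OF dl] by blast
    have ut: "column j A \<bullet> u = 0" if "j \<in> tt l0" for j
      using u(2)[of "column j A"] that by (auto simp: orthogonal_def inner_commute intro: span_base)
    obtain jn where jn: "column jn A \<bullet> u \<noteq> 0" using transpose_inj[OF full u(1)] by blast
    obtain s where s: "\<forall>j\<in>tt l0. column j A \<bullet> s = 0" "0 \<le> \<beta> \<bullet> s" "\<exists>j. column j A \<bullet> s > 0"
    proof (cases "\<beta> \<bullet> u = 0")
      case True
      show ?thesis
      proof (cases "column jn A \<bullet> u > 0")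
        case True then show ?thesis using ut \<open>\<beta> \<bullet> u = 0\<close> by (intro that[of u]) auto
      next
        case False then have "column jn A \<bullet> (-u) > 0" using jn by simp
        then show ?thesis using ut \<open>\<beta> \<bullet> u = 0\<close> by (intro that[of "-u"]) auto
      qed
    next
      case False
      show ?thesis
      proof (cases "\<beta> \<bullet> u > 0")
        case True
        have "\<exists>j. column j A \<bullet> u > 0" using rec True by (meson not_le)
        then show ?thesis using ut True by (intro that[of u]) auto
      next
        case F2: False
        then have bu: "\<beta> \<bullet> (-u) > 0" using False by simp
        have "\<exists>j. column j A \<bullet> (-u) > 0" using rec bu by (meson not_le)
        then show ?thesis using ut bu by (intro that[of "-u"]) auto
      qed
    qed
    define P where "P = {j. column j A \<bullet> s > 0}"
    have P: "finite P" "P \<noteq> {}" "\<forall>j\<in>P. 0 < column j A \<bullet> s" "\<forall>j\<in>P. 0 \<le> c $ j - column j A \<bullet> l0"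
      using s l0 by (auto simp: P_def Q_def dual_feasible_iff)
    obtain k where k: "k \<in> P" "0 \<le> (c $ k - column k A \<bullet> l0) / (column k A \<bullet> s)"
      "\<forall>j\<in>P. ((c $ k - column k A \<bullet> l0) / (column k A \<bullet> s)) * (column j A \<bullet> s) \<le> c $ j - column j A \<bullet> l0"
      using ratio_test[OF P] by blast
    define t where "t = (c $ k - column k A \<bullet> l0) / (column k A \<bullet> s)"
    define l1 where "l1 = l0 + t *\<^sub>R s"
    have cl1: "column j A \<bullet> l1 = column j A \<bullet> l0 + t * (column j A \<bullet> s)" for j
      by (simp add: l1_def inner_add_right)
    have "Q l1"
      unfolding Q_def dual_feasible_iff
    proof (intro conjI allI)
      fix j show "column j A \<bullet> l1 \<le> c $ j"
      proof (cases "j \<in> P")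
        case True
        then have "t * (column j A \<bullet> s) \<le> c $ j - column j A \<bullet> l0" using k(3) unfolding t_def by blast
        then show ?thesis by (simp add: cl1)
      next
        case False then have "column j A \<bullet> s \<le> 0" by (simp add: P_def)
        then have "t * (column j A \<bullet> s) \<le> 0" using k(2) unfolding t_def by (rule mult_nonneg_nonpos[rotated])
        moreover have "column j A \<bullet> l0 \<le> c $ j" using l0 by (simp add: Q_def dual_feasible_iff)
        ultimately show ?thesis by (simp add: cl1)
      qed
      have "0 \<le> t * (\<beta> \<bullet> s)" using k(2) s(2) unfolding t_def by (rule mult_nonneg_nonneg)
      then show "\<beta> \<bullet> l \<le> \<beta> \<bullet> l1" using l0 by (simp add: Q_def l1_def inner_add_right)
    qed
    have sub: "insert k (tt l0) \<subseteq> tt l1"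
    proof
      fix j assume "j \<in> insert k (tt l0)"
      then show "j \<in> tt l1"
      proof
        assume "j = k"
        have "column k A \<bullet> s > 0" using k(1) by (simp add: P_def)
        then show ?thesis using \<open>j = k\<close> by (simp add: tt_def cl1 t_def)
      next
        assume "j \<in> tt l0" then show ?thesis using s(1) by (simp add: tt_def cl1)
      qed
    qed
    have "k \<notin> tt l0" using s(1) k(1) by (auto simp: P_def)
    then have "card (tt l0) < card (insert k (tt l0))" by simp
    also have "\<dots> \<le> card (tt l1)" using sub by (intro card_mono) auto
    finally show False using max \<open>Q l1\<close> by force
  qed
  then show thesis using l0 by (intro that[of l0]) (auto simp: Q_def tt_def)
qed

lemma dual_basis:
  fixes A :: "real^'d^'m"
  assumes full: "rank A = CARD('m)" and feas: "dual_feasible A c l"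
    and rec: "\<forall>u. (\<forall>j. column j A \<bullet> u \<le> 0) \<longrightarrow> \<beta> \<bullet> u \<le> 0"
  obtains J where "is_basis A J" "dual_feasible A c (basic_dual A c J)" "\<beta> \<bullet> l \<le> \<beta> \<bullet> basic_dual A c J"
proof -
  obtain l' where l': "dual_feasible A c l'" "\<beta> \<bullet> l \<le> \<beta> \<bullet> l'"
    "dim ((\<lambda>j. column j A) ` {j. column j A \<bullet> l' = c $ j}) = CARD('m)"
    using dual_vertex[OF full feas rec] by blast
  have "kerfree A {}" by (auto simp: kerfree_def vec_eq_iff)
  then obtain J where J: "is_basis A J" "J \<subseteq> {j. column j A \<bullet> l' = c $ j}"
    using extend_basis[OF _ _ l'(3)] by blast
  have "basic_dual A c J = l'" using J by (intro basic_dual_eq) (auto simp: transpose_comp)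
  then show thesis using J l' by (intro that[of J]) auto
qed

lemma lp_main:
  fixes A :: "real^'d^'m"
  assumes full: "rank A = CARD('m)" and pf: "primal_feasible A \<beta> x0" and df: "dual_feasible A c l0"
  obtains J where "is_basis A J" "dual_feasible A c (basic_dual A c J)"
    "\<forall>j. 0 \<le> basic_primal A J \<beta> $ j" "has_optimal A c \<beta>" "opt_value A c \<beta> = \<beta> \<bullet> basic_dual A c J"
proof -
  obtain xs where opt: "primal_optimal A c \<beta> xs" using primal_attain[OF pf df] by blast
  have xsf: "primal_feasible A \<beta> xs" using opt by (simp add: primal_optimal_def)
  have rec: "\<forall>u. (\<forall>j. column j A \<bullet> u \<le> 0) \<longrightarrow> \<beta> \<bullet> u \<le> 0"
  proof (intro allI impI)
    fix u :: "real^'m" assume u: "\<forall>j. column j A \<bullet> u \<le> 0"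
    have "\<beta> \<bullet> u = (\<Sum>j\<in>UNIV. x0 $ j * (column j A \<bullet> u))"
      using pf by (simp add: primal_feasible_def Ax_inner[symmetric])
    also have "\<dots> \<le> 0" using pf u by (intro sum_nonpos mult_nonneg_nonpos) (auto simp: primal_feasible_def)
    finally show "\<beta> \<bullet> u \<le> 0" .
  qed
  define F where "F = {J. is_basis A J \<and> dual_feasible A c (basic_dual A c J)}"
  have finF: "finite F" by (rule finite_subset[OF subset_UNIV]) simp
  have "\<exists>J\<in>F. c \<bullet> xs \<le> \<beta> \<bullet> basic_dual A c J"
  proof (rule ccontr)
    assume "\<not> ?thesis"
    then have lt: "\<forall>J\<in>F. \<beta> \<bullet> basic_dual A c J < c \<bullet> xs" by auto
    define t0 where "t0 = Max (insert (c \<bullet> xs - 1) ((\<lambda>J. \<beta> \<bullet> basic_dual A c J) ` F))"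
    have "t0 < c \<bullet> xs" using lt finF by (simp add: t0_def)
    then obtain l where l: "dual_feasible A c l" "t0 < \<beta> \<bullet> l" using farkas_approx[OF opt] by blast
    obtain J where J: "is_basis A J" "dual_feasible A c (basic_dual A c J)" "\<beta> \<bullet> l \<le> \<beta> \<bullet> basic_dual A c J"
      using dual_basis[OF full l(1) rec] by blast
    have "J \<in> F" using J by (simp add: F_def)
    then have "\<beta> \<bullet> basic_dual A c J \<le> t0" using finF by (simp add: t0_def)
    then show False using J(3) l(2) by simp
  qed
  then obtain Js where Js: "is_basis A Js" "dual_feasible A c (basic_dual A c Js)"
    "c \<bullet> xs \<le> \<beta> \<bullet> basic_dual A c Js" by (auto simp: F_def)
  define ls where "ls = basic_dual A c Js"
  have eqv: "\<beta> \<bullet> ls = c \<bullet> xs" using Js weak_duality[OF xsf Js(2)] by (simp add: ls_def)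
  have compl: "column j A \<bullet> ls = c $ j" if "xs $ j \<noteq> 0" for j
  proof -
    have e1: "\<beta> \<bullet> ls = (\<Sum>j\<in>UNIV. xs $ j * (column j A \<bullet> ls))"
      using xsf Ax_inner[of A xs ls] by (simp add: primal_feasible_def)
    have e2: "c \<bullet> xs = (\<Sum>j\<in>UNIV. xs $ j * c $ j)" by (simp add: inner_vec_def mult.commute)
    have "(\<Sum>j\<in>UNIV. xs $ j * (c $ j - column j A \<bullet> ls)) = c \<bullet> xs - \<beta> \<bullet> ls"
      unfolding e1 e2 by (simp add: right_diff_distrib sum_subtractf)
    also have "\<dots> = 0" using eqv by simp
    finally have "\<forall>j\<in>UNIV. xs $ j * (c $ j - column j A \<bullet> ls) = 0"
      using xsf Js(2) by (subst sum_nonneg_eq_0_iff[symmetric]) 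
        (auto simp: primal_feasible_def dual_feasible_iff ls_def intro!: mult_nonneg_nonneg)
    then show ?thesis using that by force
  qed
  define Tt where "Tt = {j. column j A \<bullet> ls = c $ j}"
  have JT: "Js \<subseteq> Tt" using basic_dual[OF Js(1), of c] by (auto simp: Tt_def ls_def transpose_comp)
  have "span ((\<lambda>j. column j A) ` Tt) = UNIV"
    using span_mono[OF image_mono[OF JT, of "\<lambda>j. column j A"]] basis_span[OF Js(1)] by auto
  then have dT: "dim ((\<lambda>j. column j A) ` Tt) = CARD('m)" using dim_eq_full[of "(\<lambda>j. column j A) ` Tt"] by simp
  obtain x' where x': "\<forall>j. 0 \<le> x' $ j" "A *v x' = \<beta>" "\<forall>j. j \<notin> Tt \<longrightarrow> x' $ j = 0"
    "kerfree A {j. x' $ j \<noteq> 0}"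
  proof -
    have a1: "\<forall>j. 0 \<le> xs $ j" "A *v xs = \<beta>" using xsf by (auto simp: primal_feasible_def)
    have a2: "\<forall>j. j \<notin> Tt \<longrightarrow> xs $ j = 0" unfolding Tt_def using compl by blast
    show ?thesis using reduce_support[OF a1 a2] that by blast
  qed
  obtain J where J: "is_basis A J" "{j. x' $ j \<noteq> 0} \<subseteq> J" "J \<subseteq> Tt"
    using extend_basis[OF x'(4) _ dT] x'(3) by blast
  have bd: "basic_dual A c J = ls" using J by (intro basic_dual_eq) (auto simp: Tt_def transpose_comp)
  have bp: "basic_primal A J \<beta> = x'" using J x' by (intro basic_primal_eq) auto
  show thesis
  proof (rule that[OF J(1)])
    show "dual_feasible A c (basic_dual A c J)" using Js(2) by (simp add: bd ls_def)
    show "\<forall>j. 0 \<le> basic_primal A J \<beta> $ j" using x' by (simp add: bp)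
    show "has_optimal A c \<beta>" using opt by (auto simp: has_optimal_def)
    show "opt_value A c \<beta> = \<beta> \<bullet> basic_dual A c J" using opt_value_eq[OF opt] eqv by (simp add: bd)
  qed
qed

lemma basic_value:
  fixes A :: "real^'d^'m"
  assumes "is_basis A I"
  shows "c \<bullet> basic_primal A I \<beta> = \<beta> \<bullet> basic_dual A c I"
proof -
  let ?x = "basic_primal A I \<beta>" and ?l = "basic_dual A c I"
  have x: "\<forall>j. j \<notin> I \<longrightarrow> ?x $ j = 0" "A *v ?x = \<beta>" using basic_primal[OF assms] by auto
  have l: "\<forall>j\<in>I. column j A \<bullet> ?l = c $ j" using basic_dual[OF assms, of c] by (simp add: transpose_comp)
  have "c \<bullet> ?x = (\<Sum>j\<in>UNIV. ?x $ j * c $ j)" by (simp add: inner_vec_def mult.commute)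
  also have "\<dots> = (\<Sum>j\<in>UNIV. ?x $ j * (column j A \<bullet> ?l))"
  proof (rule sum.cong[OF refl])
    fix j show "?x $ j * c $ j = ?x $ j * (column j A \<bullet> ?l)"
      by (cases "j \<in> I") (use x l in auto)
  qed
  also have "\<dots> = (A *v ?x) \<bullet> ?l" by (simp add: Ax_inner)
  finally show ?thesis using x by simp
qed

lemma bp_linear:
  fixes A :: "real^'d^'m"
  assumes "is_basis A J"
  shows "linear (basic_primal A J)"
proof (rule linearI)
  fix x y :: "real^'m" and r :: real
  show "basic_primal A J (x + y) = basic_primal A J x + basic_primal A J y"
    using basic_primal[OF assms, of x] basic_primal[OF assms, of y]
    by (intro basic_primal_eq[OF assms]) (auto simp: matrix_vector_right_distrib)
  show "basic_primal A J (r *\<^sub>R x) = r *\<^sub>R basic_primal A J x"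
    using basic_primal[OF assms, of x]
    by (intro basic_primal_eq[OF assms]) (auto simp: matrix_vector_mult_scaleR)
qed

lemma cont_max:
  fixes S :: "(real^'m) set"
  assumes "finite S" "S \<noteq> {}"
  shows "continuous_on UNIV (\<lambda>g. Max ((\<lambda>v. g \<bullet> v) ` S))"
  using assms
proof (induction S rule: finite_ne_induct)
  case (singleton x) then show ?case by (simp add: continuous_on_inner continuous_on_id continuous_on_const)
next
  case (insert x F)
  have "(\<lambda>g. Max ((\<lambda>v. g \<bullet> v) ` insert x F)) = (\<lambda>g. max (g \<bullet> x) (Max ((\<lambda>v. g \<bullet> v) ` F)))"
    using insert by (simp add: Max_insert)
  then show ?case using insert
    by (simp add: continuous_on_max continuous_on_inner continuous_on_id continuous_on_const)
qed

lemma ob_props: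
  fixes A :: "real^'d^'m"
  assumes "I \<in> optimal_bases A b c"
  shows "opt_value A c b = b \<bullet> basic_dual A c I" "dual_optimal A c b (basic_dual A c I)"
    "primal_optimal A c b (basic_primal A I b)"
proof -
  have I: "is_basis A I" "dual_feasible A c (basic_dual A c I)" "\<forall>j. 0 \<le> basic_primal A I b $ j"
    using assms by (auto simp: optimal_bases_def)
  have pf: "primal_feasible A b (basic_primal A I b)"
    using I basic_primal[OF I(1), of b] by (simp add: primal_feasible_def)
  have val: "c \<bullet> basic_primal A I b = b \<bullet> basic_dual A c I" by (rule basic_value[OF I(1)])
  show po: "primal_optimal A c b (basic_primal A I b)"
    unfolding primal_optimal_def using pf val weak_duality[OF _ I(2)] by auto
  show "opt_value A c b = b \<bullet> basic_dual A c I" using opt_value_eq[OF po] val by simp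
  show "dual_optimal A c b (basic_dual A c I)"
    unfolding dual_optimal_def
  proof (intro conjI allI impI)
    show "dual_feasible A c (basic_dual A c I)" by (rule I(2))
    fix \<mu> assume "dual_feasible A c \<mu>"
    then show "b \<bullet> \<mu> \<le> b \<bullet> basic_dual A c I" using weak_duality[OF pf, of c \<mu>] val by simp
  qed
qed

lemma df_exists:
  fixes A :: "real^'d^'m"
  assumes "primal_optimal A c b xs"
  shows "\<exists>l. dual_feasible A c l"
  using farkas_approx[OF assms, of "c \<bullet> xs - 1"] by auto

lemma ob_nonempty:
  fixes A :: "real^'d^'m"
  assumes full: "rank A = CARD('m)" and opt: "primal_optimal A c b xs"
  shows "optimal_bases A b c \<noteq> {}"
proof -
  obtain l where l: "dual_feasible A c l" using df_exists[OF opt] by blast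
  have "primal_feasible A b xs" using opt by (simp add: primal_optimal_def)
  from lp_main[OF full this l] obtain J where "is_basis A J" "dual_feasible A c (basic_dual A c J)"
    "\<forall>j. 0 \<le> basic_primal A J b $ j" by blast
  then show ?thesis by (auto simp: optimal_bases_def)
qed

lemma finite_ob: "finite (optimal_bases A b c)"
  by (rule finite_subset[OF subset_UNIV]) simp

lemma key:
  fixes A :: "real^'d^'m"
  assumes full: "rank A = CARD('m)" and opt: "primal_optimal A c b xs"
  shows "\<exists>\<delta>>0. \<forall>\<beta> x. dist \<beta> b < \<delta> \<longrightarrow> primal_feasible A \<beta> x \<longrightarrow>
           has_optimal A c \<beta> \<and> opt_value A c \<beta> = Max {\<beta> \<bullet> basic_dual A c I | I. I \<in> optimal_bases A b c}"
proof -
  obtain l0 where l0: "dual_feasible A c l0" using df_exists[OF opt] by blast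
  define B where "B = {J. is_basis A J \<and> \<not> (\<forall>j. 0 \<le> basic_primal A J b $ j)}"
  have finB: "finite B" by (rule finite_subset[OF subset_UNIV]) simp
  have ev: "\<forall>J\<in>B. eventually (\<lambda>\<beta>. \<exists>j. basic_primal A J \<beta> $ j < 0) (nhds b)"
  proof
    fix J assume J: "J \<in> B"
    then obtain j where j: "basic_primal A J b $ j < 0" by (auto simp: B_def not_le)
    have lin: "linear (basic_primal A J)" using J by (intro bp_linear) (simp add: B_def)
    have "isCont (basic_primal A J) b"
      using lin by (simp add: linear_conv_bounded_linear linear_continuous_at)
    then have "isCont (\<lambda>\<beta>. basic_primal A J \<beta> $ j) b"
      by (intro continuous_intros)
    then have "((\<lambda>\<beta>. basic_primal A J \<beta> $ j) \<longlongrightarrow> basic_primal A J b $ j) (nhds b)"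
      unfolding isCont_def by (rule tendsto_at_iff_tendsto_nhds[THEN iffD1])
    from order_tendstoD(2)[OF this j] show "eventually (\<lambda>\<beta>. \<exists>j. basic_primal A J \<beta> $ j < 0) (nhds b)"
      by (rule eventually_mono) blast
  qed
  have "eventually (\<lambda>\<beta>. \<forall>J\<in>B. \<exists>j. basic_primal A J \<beta> $ j < 0) (nhds b)"
    by (rule eventually_ball_finite[OF finB ev])
  then obtain \<delta> where \<delta>: "\<delta> > 0" "\<And>\<beta>. dist \<beta> b < \<delta> \<Longrightarrow> \<forall>J\<in>B. \<exists>j. basic_primal A J \<beta> $ j < 0"
    unfolding eventually_nhds_metric by blast
  have finI: "finite {\<beta> \<bullet> basic_dual A c I | I. I \<in> optimal_bases A b c}" for \<beta>
    using finite_ob by simp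
  show ?thesis
  proof (intro exI[of _ \<delta>] conjI allI impI)
    show "\<delta> > 0" by fact
    fix \<beta> x assume d: "dist \<beta> b < \<delta>" and pf: "primal_feasible A \<beta> x"
    obtain J where J: "is_basis A J" "dual_feasible A c (basic_dual A c J)"
      "\<forall>j. 0 \<le> basic_primal A J \<beta> $ j" "has_optimal A c \<beta>" "opt_value A c \<beta> = \<beta> \<bullet> basic_dual A c J"
      using lp_main[OF full pf l0] by blast
    show "has_optimal A c \<beta>" by fact
    have "J \<notin> B" using \<delta>(2)[OF d] J(3) by (meson not_le)
    then have JO: "J \<in> optimal_bases A b c" using J by (auto simp: B_def optimal_bases_def)
    obtain xo where xo: "primal_optimal A c \<beta> xo" using J(4) by (auto simp: has_optimal_def)
    have le: "\<beta> \<bullet> basic_dual A c I \<le> opt_value A c \<beta>" if "I \<in> optimal_bases A b c" for I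
      using that weak_duality[of A \<beta> xo c "basic_dual A c I"] xo opt_value_eq[OF xo]
      by (auto simp: optimal_bases_def primal_optimal_def)
    show "opt_value A c \<beta> = Max {\<beta> \<bullet> basic_dual A c I | I. I \<in> optimal_bases A b c}"
    proof (rule antisym)
      show "opt_value A c \<beta> \<le> Max {\<beta> \<bullet> basic_dual A c I | I. I \<in> optimal_bases A b c}"
        using JO J(5) finI by (intro Max_ge_iff[THEN iffD2]) auto
      show "Max {\<beta> \<bullet> basic_dual A c I | I. I \<in> optimal_bases A b c} \<le> opt_value A c \<beta>"
        using JO finI le by (intro Max.boundedI) auto
    qed
  qed
qed

lemma has_opt_iff:
  fixes A :: "real^'d^'m"
  assumes df: "dual_feasible A c l0"
  shows "has_optimal A c \<beta> \<longleftrightarrow> \<beta> \<in> (\<lambda>x. A *v x) ` orth"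
proof
  assume "has_optimal A c \<beta>"
  then obtain x where "primal_optimal A c \<beta> x" by (auto simp: has_optimal_def)
  then show "\<beta> \<in> (\<lambda>x. A *v x) ` orth"
    by (auto simp: primal_optimal_def primal_feasible_def orth_def)
next
  assume "\<beta> \<in> (\<lambda>x. A *v x) ` orth"
  then obtain x where "x \<in> orth" "A *v x = \<beta>" by blast
  then have "primal_feasible A \<beta> x" by (simp add: primal_feasible_def orth_def)
  from primal_attain[OF this df] show "has_optimal A c \<beta>" by (simp add: has_optimal_def)
qed

lemma closed_C: "closed ((\<lambda>x. A *v x) ` orth)" for A :: "real^'d^'m"
  by (rule closed_orth_image) (rule matrix_vector_mul_linear)

lemma opt_borel:
  fixes A :: "real^'d^'m"
  assumes full: "rank A = CARD('m)" and opt: "primal_optimal A c b xs"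
  shows "opt_value A c \<in> borel_measurable borel"
proof -
  obtain l0 where l0: "dual_feasible A c l0" using df_exists[OF opt] by blast
  define C where "C = (\<lambda>x. A *v x) ` orth"
  define DF where "DF = {J. is_basis A J \<and> dual_feasible A c (basic_dual A c J)}"
  define V where "V = basic_dual A c ` DF"
  have finV: "finite V" unfolding V_def by (rule finite_imageI, rule finite_subset[OF subset_UNIV]) simp
  have "optimal_bases A b c \<subseteq> DF" by (auto simp: optimal_bases_def DF_def)
  then have neV: "V \<noteq> {}" using ob_nonempty[OF full opt] by (auto simp: V_def)
  define \<Phi> where "\<Phi> g = Max ((\<lambda>v. g \<bullet> v) ` V)" for g
  have eq: "opt_value A c = (\<lambda>\<beta>. if \<beta> \<in> C then \<Phi> \<beta> else Inf {})"
  proof (rule ext)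
    fix \<beta>
    show "opt_value A c \<beta> = (if \<beta> \<in> C then \<Phi> \<beta> else Inf {})"
    proof (cases "\<beta> \<in> C")
      case True
      then obtain x where "x \<in> orth" "A *v x = \<beta>" by (auto simp: C_def)
      then have pf: "primal_feasible A \<beta> x" by (simp add: primal_feasible_def orth_def)
      obtain J where J: "is_basis A J" "dual_feasible A c (basic_dual A c J)"
        "has_optimal A c \<beta>" "opt_value A c \<beta> = \<beta> \<bullet> basic_dual A c J"
        using lp_main[OF full pf l0] by blast
      obtain xo where xo: "primal_optimal A c \<beta> xo" using J(3) by (auto simp: has_optimal_def)
      have "\<Phi> \<beta> = opt_value A c \<beta>"
      proof (rule antisym)
        show "\<Phi> \<beta> \<le> opt_value A c \<beta>"
          unfolding \<Phi>_def
        proof (rule Max.boundedI)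
          show "finite ((\<lambda>v. \<beta> \<bullet> v) ` V)" using finV by simp
          show "(\<lambda>v. \<beta> \<bullet> v) ` V \<noteq> {}" using neV by simp
          fix a assume "a \<in> (\<lambda>v. \<beta> \<bullet> v) ` V"
          then obtain J' where J': "J' \<in> DF" "a = \<beta> \<bullet> basic_dual A c J'" by (auto simp: V_def)
          have "\<beta> \<bullet> basic_dual A c J' \<le> c \<bullet> xo"
            using J' xo by (intro weak_duality) (auto simp: DF_def primal_optimal_def)
          then show "a \<le> opt_value A c \<beta>" using J' opt_value_eq[OF xo] by simp
        qed
        have "J \<in> DF" using J by (simp add: DF_def)
        then have "\<beta> \<bullet> basic_dual A c J \<in> (\<lambda>v. \<beta> \<bullet> v) ` V" by (auto simp: V_def)
        then show "opt_value A c \<beta> \<le> \<Phi> \<beta>" unfolding \<Phi>_def J(4) using finV by simp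
      qed
      then show ?thesis using True by simp
    next
      case False
      have "{c \<bullet> x | x. primal_feasible A \<beta> x} = {}"
        using False by (auto simp: C_def primal_feasible_def orth_def)
      then show ?thesis using False by (simp add: opt_value_def)
    qed
  qed
  have \<Phi>m: "\<Phi> \<in> borel_measurable borel"
    unfolding \<Phi>_def by (rule borel_measurable_continuous_onI[OF cont_max[OF finV neV]])
  have "C \<in> sets borel" unfolding C_def by (rule borel_closed[OF closed_C])
  then show ?thesis unfolding eq
    by (intro measurable_If_set \<Phi>m) auto
qed

lemma bounded_range_le: "bounded (range f) \<Longrightarrow> \<exists>K. \<forall>x. \<bar>f x :: real\<bar> \<le> K"
  by (auto simp: bounded_iff)

lemma meas_bound_integrable:
  fixes f :: "'a \<Rightarrow> real"
  assumes "prob_space M" "f \<in> borel_measurable M" "\<And>x. \<bar>f x\<bar> \<le> K"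
  shows "integrable M f"
proof -
  interpret prob_space M by fact
  show ?thesis using assms(3) by (intro integrable_const_bound[of _ K] assms(2)) auto
qed

lemma tight:
  fixes Z :: "nat \<Rightarrow> 'a \<Rightarrow> 'e::euclidean_space" and G :: "'b \<Rightarrow> 'e"
  assumes M: "prob_space M" and N: "prob_space N"
    and Zm: "\<And>n. Z n \<in> borel_measurable M" and Gm: "G \<in> borel_measurable N"
    and conv: "conv_in_distr M Z N G" and R: "filterlim R at_top sequentially"
  shows "(\<lambda>n. measure M {\<omega>\<in>space M. R n \<le> norm (Z n \<omega>)}) \<longlonglongrightarrow> 0"
proof -
  interpret M: prob_space M by fact
  interpret N: prob_space N by fact
  define f where "f k g = min 1 (max 0 (norm g - real k))" for k :: nat and g :: 'e
  have fc: "continuous_on UNIV (f k)" for k unfolding f_def by (intro continuous_intros)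
  have fb: "bounded (range (f k))" for k
    unfolding bounded_iff by (intro exI[of _ 1]) (auto simp: f_def)
  have f01: "0 \<le> f k g" "f k g \<le> 1" for k g by (auto simp: f_def)
  have fm: "f k \<in> borel_measurable borel" for k by (rule borel_measurable_continuous_onI[OF fc])
  have lim_k: "(\<lambda>k. \<integral>\<omega>. f k (G \<omega>) \<partial>N) \<longlonglongrightarrow> (\<integral>\<omega>. 0 \<partial>N)"
  proof (rule integral_dominated_convergence[where w="\<lambda>_. 1"])
    show "(\<lambda>\<omega>. 0::real) \<in> borel_measurable N" by simp
    show "(\<lambda>\<omega>. f k (G \<omega>)) \<in> borel_measurable N" for k using measurable_compose[OF Gm fm] by simp
    show "integrable N (\<lambda>_. 1::real)" by simp
    show "AE x in N. (\<lambda>k. f k (G x)) \<longlonglongrightarrow> 0"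
    proof (rule AE_I2)
      fix x
      have "eventually (\<lambda>k. f k (G x) = 0) sequentially"
      proof -
        obtain k0 :: nat where "norm (G x) \<le> real k0" using real_arch_simple by blast
        then show ?thesis unfolding eventually_sequentially
          by (intro exI[of _ k0]) (auto simp: f_def)
      qed
      then show "(\<lambda>k. f k (G x)) \<longlonglongrightarrow> 0" by (rule tendsto_eventually)
    qed
    show "AE x in N. norm (f k (G x)) \<le> 1" for k using f01 by auto
  qed
  then have lim_k: "(\<lambda>k. \<integral>\<omega>. f k (G \<omega>) \<partial>N) \<longlonglongrightarrow> 0" by simp
  have conv_k: "(\<lambda>n. \<integral>\<omega>. f k (Z n \<omega>) \<partial>M) \<longlonglongrightarrow> (\<integral>\<omega>. f k (G \<omega>) \<partial>N)" for k
    using conv fc fb by (simp add: conv_in_distr_def)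
  have Sm: "{\<omega>\<in>space M. R n \<le> norm (Z n \<omega>)} \<in> sets M" for n
    by (rule borel_measurable_le) (use measurable_compose[OF Zm borel_measurable_norm] in auto)
  have le: "measure M {\<omega>\<in>space M. R n \<le> norm (Z n \<omega>)} \<le> (\<integral>\<omega>. f k (Z n \<omega>) \<partial>M)"
    if kn: "real k + 1 \<le> R n" for k n
  proof -
    have "measure M {\<omega>\<in>space M. R n \<le> norm (Z n \<omega>)} = (\<integral>\<omega>. indicator {\<omega>\<in>space M. R n \<le> norm (Z n \<omega>)} \<omega> \<partial>M)"
      using Sm[of n] by (simp add: Int_absorb2)
    also have "\<dots> \<le> (\<integral>\<omega>. f k (Z n \<omega>) \<partial>M)"
    proof (rule integral_mono)
      show "integrable M (indicator {\<omega>\<in>space M. R n \<le> norm (Z n \<omega>)} :: 'a \<Rightarrow> real)"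
        using Sm[of n] by (intro meas_bound_integrable[OF M, of _ 1]) (auto simp: indicator_def)
      show "integrable M (\<lambda>\<omega>. f k (Z n \<omega>))"
        using f01 by (intro meas_bound_integrable[OF M, of _ 1] measurable_compose[OF Zm fm]) auto
      fix \<omega> assume "\<omega> \<in> space M"
      show "indicator {\<omega>\<in>space M. R n \<le> norm (Z n \<omega>)} \<omega> \<le> f k (Z n \<omega>)"
        using kn f01[of k "Z n \<omega>"] by (auto simp: indicator_def f_def)
    qed
    finally show ?thesis .
  qed
  show ?thesis
  proof (rule tendstoI)
    fix e :: real assume e: "e > 0"
    have "eventually (\<lambda>k. (\<integral>\<omega>. f k (G \<omega>) \<partial>N) < e) sequentially"
      using order_tendstoD(2)[OF lim_k e] .
    then obtain k where k: "(\<integral>\<omega>. f k (G \<omega>) \<partial>N) < e" by (auto simp: eventually_sequentially)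
    have ev1: "eventually (\<lambda>n. (\<integral>\<omega>. f k (Z n \<omega>) \<partial>M) < e) sequentially"
      using order_tendstoD(2)[OF conv_k k] .
    have ev2: "eventually (\<lambda>n. real k + 1 \<le> R n) sequentially"
      using R by (simp add: filterlim_at_top)
    show "eventually (\<lambda>n. dist (measure M {\<omega>\<in>space M. R n \<le> norm (Z n \<omega>)}) 0 < e) sequentially"
      using ev1 ev2
    proof eventually_elim
      case (elim n)
      then show ?case using le[OF elim(2)] by (simp add: dist_real_def)
    qed
  qed
qed

lemma conv_closed_AE:
  fixes Z :: "nat \<Rightarrow> 'a \<Rightarrow> 'e::euclidean_space" and G :: "'b \<Rightarrow> 'e"
  assumes M: "prob_space M" and N: "prob_space N"
    and Zm: "\<And>n. Z n \<in> borel_measurable M" and Gm: "G \<in> borel_measurable N"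
    and conv: "conv_in_distr M Z N G" and W: "closed W" "W \<noteq> {}"
    and Bad: "\<And>n. Bad n \<in> sets M" and lim: "(\<lambda>n. measure M (Bad n)) \<longlonglongrightarrow> 0"
    and good: "eventually (\<lambda>n. \<forall>\<omega>\<in>space M - Bad n. Z n \<omega> \<in> W) sequentially"
  shows "AE \<omega> in N. G \<omega> \<in> W"
proof -
  interpret M: prob_space M by fact
  interpret N: prob_space N by fact
  define f where "f g = min 1 (infdist g W)" for g :: 'e
  have fc: "continuous_on UNIV f" unfolding f_def by (intro continuous_intros)
  have fb: "bounded (range f)"
    unfolding bounded_iff by (intro exI[of _ 1]) (auto simp: f_def infdist_nonneg)
  have f01: "0 \<le> f g" "f g \<le> 1" for g by (auto simp: f_def infdist_nonneg)
  have fm: "f \<in> borel_measurable borel" by (rule borel_measurable_continuous_onI[OF fc])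
  have c: "(\<lambda>n. \<integral>\<omega>. f (Z n \<omega>) \<partial>M) \<longlonglongrightarrow> (\<integral>\<omega>. f (G \<omega>) \<partial>N)"
    using conv fc fb by (simp add: conv_in_distr_def)
  have z: "(\<lambda>n. \<integral>\<omega>. f (Z n \<omega>) \<partial>M) \<longlonglongrightarrow> 0"
  proof (rule Lim_null_comparison[OF _ lim])
    show "eventually (\<lambda>n. norm (\<integral>\<omega>. f (Z n \<omega>) \<partial>M) \<le> measure M (Bad n)) sequentially"
      using good
    proof eventually_elim
      case (elim n)
      have int: "integrable M (\<lambda>\<omega>. f (Z n \<omega>))"
        using f01 by (intro meas_bound_integrable[OF M, of _ 1] measurable_compose[OF Zm fm]) auto
      have "norm (\<integral>\<omega>. f (Z n \<omega>) \<partial>M) = (\<integral>\<omega>. f (Z n \<omega>) \<partial>M)"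
        using f01 by (simp add: integral_nonneg)
      also have "\<dots> \<le> (\<integral>\<omega>. indicator (Bad n) \<omega> \<partial>M)"
      proof (rule integral_mono[OF int])
        show "integrable M (indicator (Bad n) :: 'a \<Rightarrow> real)"
          using Bad[of n] by (intro meas_bound_integrable[OF M, of _ 1]) (auto simp: indicator_def)
        fix \<omega> assume om: "\<omega> \<in> space M"
        show "f (Z n \<omega>) \<le> indicator (Bad n) \<omega>"
        proof (cases "\<omega> \<in> Bad n")
          case True then show ?thesis using f01 by simp
        next
          case False
          then have "Z n \<omega> \<in> W" using elim om by blast
          then show ?thesis using False by (simp add: f_def)
        qed
      qed
      also have "\<dots> = measure M (Bad n)" using Bad[of n] sets.sets_into_space[OF Bad[of n]]
        by (simp add: Int_absorb2)
      finally show ?case .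
    qed
  qed
  have i0: "(\<integral>\<omega>. f (G \<omega>) \<partial>N) = 0" using LIMSEQ_unique[OF c z] .
  have intN: "integrable N (\<lambda>\<omega>. f (G \<omega>))"
    using f01 by (intro meas_bound_integrable[OF N, of _ 1] measurable_compose[OF Gm fm]) auto
  have "AE \<omega> in N. f (G \<omega>) = 0"
    using integral_nonneg_eq_0_iff_AE[OF intN] i0 f01 by auto
  then show ?thesis
  proof (rule AE_mp[OF _ AE_I2], intro impI)
    fix \<omega> assume "f (G \<omega>) = 0"
    then have "infdist (G \<omega>) W = 0" using infdist_nonneg[of "G \<omega>" W] by (simp add: f_def min_def split: if_splits)
    then show "G \<omega> \<in> W" using in_closure_iff_infdist_zero[OF W(2)] W(1) closure_closed by metis
  qed
qed

lemma conv_transfer: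
  fixes Z :: "nat \<Rightarrow> 'a \<Rightarrow> 'e::euclidean_space" and G :: "'b \<Rightarrow> 'e"
    and X :: "nat \<Rightarrow> 'a \<Rightarrow> real" and \<phi> :: "'e \<Rightarrow> real"
  assumes M: "prob_space M" and N: "prob_space N"
    and Zm: "\<And>n. Z n \<in> borel_measurable M" and Gm: "G \<in> borel_measurable N"
    and conv: "conv_in_distr M Z N G" and \<phi>c: "continuous_on UNIV \<phi>"
    and Xm: "\<And>n. X n \<in> borel_measurable M"
    and Bad: "\<And>n. Bad n \<in> sets M" and lim: "(\<lambda>n. measure M (Bad n)) \<longlonglongrightarrow> 0"
    and eq: "eventually (\<lambda>n. \<forall>\<omega>\<in>space M - Bad n. X n \<omega> = \<phi> (Z n \<omega>)) sequentially"
  shows "conv_in_distr M X N (\<lambda>\<omega>. \<phi> (G \<omega>))"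
  unfolding conv_in_distr_def
proof (intro allI impI)
  interpret M: prob_space M by fact
  interpret N: prob_space N by fact
  fix f :: "real \<Rightarrow> real" assume f: "continuous_on UNIV f \<and> bounded (range f)"
  obtain K where K: "\<forall>x. \<bar>f x\<bar> \<le> K" using bounded_range_le f by blast
  have fm: "f \<in> borel_measurable borel" using f borel_measurable_continuous_onI by blast
  have \<phi>m: "\<phi> \<in> borel_measurable borel" using \<phi>c borel_measurable_continuous_onI by blast
  have fpc: "continuous_on UNIV (\<lambda>g. f (\<phi> g))"
    using continuous_on_compose2[OF _ \<phi>c, of UNIV f] f by auto
  have fpb: "bounded (range (\<lambda>g. f (\<phi> g)))"
    using K unfolding bounded_iff by auto
  have c: "(\<lambda>n. \<integral>\<omega>. f (\<phi> (Z n \<omega>)) \<partial>M) \<longlonglongrightarrow> (\<integral>\<omega>. f (\<phi> (G \<omega>)) \<partial>N)"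
    using conv[unfolded conv_in_distr_def, rule_format, of "\<lambda>g. f (\<phi> g)"] fpc fpb by simp
  have d: "(\<lambda>n. (\<integral>\<omega>. f (X n \<omega>) \<partial>M) - (\<integral>\<omega>. f (\<phi> (Z n \<omega>)) \<partial>M)) \<longlonglongrightarrow> 0"
  proof (rule Lim_null_comparison)
    show "(\<lambda>n. 2 * K * measure M (Bad n)) \<longlonglongrightarrow> 0"
      using tendsto_mult_right_zero[OF lim, of "2 * K"] by simp
    show "eventually (\<lambda>n. norm ((\<integral>\<omega>. f (X n \<omega>) \<partial>M) - (\<integral>\<omega>. f (\<phi> (Z n \<omega>)) \<partial>M)) \<le> 2 * K * measure M (Bad n)) sequentially"
      using eq
    proof eventually_elim
      case (elim n)
      have i1: "integrable M (\<lambda>\<omega>. f (X n \<omega>))"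
        using K by (intro meas_bound_integrable[OF M, of _ K] measurable_compose[OF Xm fm]) auto
      have i2: "integrable M (\<lambda>\<omega>. f (\<phi> (Z n \<omega>)))"
        using K by (intro meas_bound_integrable[OF M, of _ K] measurable_compose[OF measurable_compose[OF Zm \<phi>m] fm]) auto
      have iB: "integrable M (\<lambda>\<omega>. 2 * K * indicator (Bad n) \<omega> :: real)"
        using Bad[of n] by (intro integrable_mult_right meas_bound_integrable[OF M, of _ 1]) (auto simp: indicator_def)
      have "norm ((\<integral>\<omega>. f (X n \<omega>) \<partial>M) - (\<integral>\<omega>. f (\<phi> (Z n \<omega>)) \<partial>M)) = norm (\<integral>\<omega>. f (X n \<omega>) - f (\<phi> (Z n \<omega>)) \<partial>M)"
        using i1 i2 by simp
      also have "\<dots> \<le> (\<integral>\<omega>. norm (f (X n \<omega>) - f (\<phi> (Z n \<omega>))) \<partial>M)"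
        by (rule integral_norm_bound)
      also have "\<dots> \<le> (\<integral>\<omega>. 2 * K * indicator (Bad n) \<omega> \<partial>M)"
      proof (rule integral_mono)
        show "integrable M (\<lambda>\<omega>. norm (f (X n \<omega>) - f (\<phi> (Z n \<omega>))))" using i1 i2 by simp
        show "integrable M (\<lambda>\<omega>. 2 * K * indicator (Bad n) \<omega>)" by (rule iB)
        fix \<omega> assume om: "\<omega> \<in> space M"
        show "norm (f (X n \<omega>) - f (\<phi> (Z n \<omega>))) \<le> 2 * K * indicator (Bad n) \<omega>"
        proof (cases "\<omega> \<in> Bad n")
          case True then show ?thesis using K[rule_format, of "X n \<omega>"] K[rule_format, of "\<phi> (Z n \<omega>)"] by simp
        next
          case False then show ?thesis using elim om by simp
        qed
      qed
      also have "\<dots> = 2 * K * measure M (Bad n)"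
        using Bad[of n] sets.sets_into_space[OF Bad[of n]] by (simp add: Int_absorb2)
      finally show ?case .
    qed
  qed
  have "(\<lambda>n. ((\<integral>\<omega>. f (X n \<omega>) \<partial>M) - (\<integral>\<omega>. f (\<phi> (Z n \<omega>)) \<partial>M)) + (\<integral>\<omega>. f (\<phi> (Z n \<omega>)) \<partial>M))
      \<longlonglongrightarrow> 0 + (\<integral>\<omega>. f (\<phi> (G \<omega>)) \<partial>N)"
    by (rule tendsto_add[OF d c])
  then show "(\<lambda>n. \<integral>\<omega>. f (X n \<omega>) \<partial>M) \<longlonglongrightarrow> (\<integral>\<omega>. f (\<phi> (G \<omega>)) \<partial>N)" by simp
qed

theorem proposition3p5:
  fixes A :: "real^'d^'m" and b :: "real^'m" and c :: "real^'d"
    and M :: "'a measure" and N :: "'b measure"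
    and bn :: "nat \<Rightarrow> 'a \<Rightarrow> real^'m" and r :: "nat \<Rightarrow> real"
    and S :: "'m set" and G :: "'b \<Rightarrow> real^'m"
  assumes full_rank: "rank A = CARD('m)"
    and A1: "\<exists>x. primal_optimal A c b x" "bounded {x. primal_optimal A c b x}"
    and M: "prob_space M" and N: "prob_space N"
    and r: "filterlim r at_top sequentially"
    and S: "S \<noteq> {}"
    and bn_meas: "\<And>n. bn n \<in> borel_measurable M"
    and bn_fixed: "\<And>n \<omega> i. \<omega> \<in> space M \<Longrightarrow> i \<notin> S \<Longrightarrow> bn n \<omega> $ i = b $ i"
    and G_meas: "G \<in> borel_measurable N"
    and G_zero: "\<And>\<omega> i. \<omega> \<in> space N \<Longrightarrow> i \<notin> S \<Longrightarrow> G \<omega> $ i = 0"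
    and G_ac: "absolutely_continuous (PiM S (\<lambda>_. lborel))
                 (distr N (PiM S (\<lambda>_. lborel)) (\<lambda>\<omega>. restrict (\<lambda>i. G \<omega> $ i) S))"
    and B1: "conv_in_distr M (\<lambda>n \<omega>. r n *\<^sub>R (bn n \<omega> - b)) N G"
    and B2: "(\<lambda>n. measure M {\<omega> \<in> space M. has_optimal A c (bn n \<omega>)}) \<longlonglongrightarrow> 1"
  shows "conv_in_distr M (\<lambda>n \<omega>. r n * (opt_value A c (bn n \<omega>) - opt_value A c b)) N
           (\<lambda>\<omega>. Max {G \<omega> \<bullet> basic_dual A c I | I. I \<in> optimal_bases A b c})
       \<and> (AE \<omega> in N. ereal (Max {G \<omega> \<bullet> basic_dual A c I | I. I \<in> optimal_bases A b c})
             = (SUP l \<in> {l. dual_optimal A c b l}. ereal (G \<omega> \<bullet> l)))"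
proof -
  interpret M: prob_space M by (rule M)
  interpret N: prob_space N by (rule N)
  obtain xs where opt: "primal_optimal A c b xs" using A1(1) by blast
  obtain l0 where l0: "dual_feasible A c l0" using df_exists[OF opt] by blast
  define OB where "OB = optimal_bases A b c"
  define V0 where "V0 = basic_dual A c ` OB"
  define \<psi> where "\<psi> g = Max {g \<bullet> basic_dual A c I | I. I \<in> OB}" for g :: "real^'m"
  have obne: "OB \<noteq> {}" unfolding OB_def by (rule ob_nonempty[OF full_rank opt])
  have finOB: "finite OB" unfolding OB_def by (rule finite_ob)
  have finV0: "finite V0" "V0 \<noteq> {}" using finOB obne by (auto simp: V0_def)
  have \<psi>_img: "\<psi> g = Max ((\<lambda>v. g \<bullet> v) ` V0)" for g
  proof -
    have "{g \<bullet> basic_dual A c I | I. I \<in> OB} = (\<lambda>v. g \<bullet> v) ` V0" by (auto simp: V0_def)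
    then show ?thesis by (simp add: \<psi>_def)
  qed
  have \<psi>c: "continuous_on UNIV \<psi>"
    unfolding \<psi>_img[abs_def] by (rule cont_max[OF finV0])
  have optb: "opt_value A c b = b \<bullet> v" if "v \<in> V0" for v
    using that ob_props(1) by (auto simp: V0_def OB_def)
  have V0do: "dual_optimal A c b v" if "v \<in> V0" for v
    using that ob_props(2) by (auto simp: V0_def OB_def)
  obtain \<delta> where \<delta>: "\<delta> > 0" "\<And>\<beta> x. dist \<beta> b < \<delta> \<Longrightarrow> primal_feasible A \<beta> x \<Longrightarrow>
      has_optimal A c \<beta> \<and> opt_value A c \<beta> = \<psi> \<beta>"
    using key[OF full_rank opt] unfolding \<psi>_def OB_def by blast
  have shift: "r * (opt_value A c \<beta> - opt_value A c b) = \<psi> (r *\<^sub>R (\<beta> - b))"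
    if r: "0 \<le> r" and d: "dist \<beta> b < \<delta>" and pf: "primal_feasible A \<beta> x" for r \<beta> x
  proof -
    define h where "h t = r * t - r * opt_value A c b" for t
    have mh: "mono h" unfolding h_def mono_def using r by (auto intro: mult_left_mono)
    have "\<psi> (r *\<^sub>R (\<beta> - b)) = Max ((\<lambda>v. (r *\<^sub>R (\<beta> - b)) \<bullet> v) ` V0)" by (rule \<psi>_img)
    also have "(\<lambda>v. (r *\<^sub>R (\<beta> - b)) \<bullet> v) ` V0 = h ` ((\<lambda>v. \<beta> \<bullet> v) ` V0)"
      unfolding image_image
    proof (rule image_cong[OF refl])
      fix v assume "v \<in> V0"
      then show "(r *\<^sub>R (\<beta> - b)) \<bullet> v = h (\<beta> \<bullet> v)"
        using optb[of v] by (simp add: h_def inner_diff_left algebra_simps)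
    qed
    also have "Max (h ` ((\<lambda>v. \<beta> \<bullet> v) ` V0)) = h (Max ((\<lambda>v. \<beta> \<bullet> v) ` V0))"
      using finV0 by (intro mono_Max_commute[symmetric] mh) auto
    also have "\<dots> = h (opt_value A c \<beta>)" using \<delta>(2)[OF d pf] \<psi>_img by simp
    finally show ?thesis by (simp add: h_def algebra_simps)
  qed
  have dualopt: "(r *\<^sub>R (\<beta> - b)) \<bullet> l \<le> \<psi> (r *\<^sub>R (\<beta> - b))"
    if r: "0 \<le> r" and d: "dist \<beta> b < \<delta>" and pf: "primal_feasible A \<beta> x" and l: "dual_optimal A c b l"
    for r \<beta> x l
  proof -
    obtain v where v: "v \<in> V0" using finV0 by blast
    have lf: "dual_feasible A c l" using l by (simp add: dual_optimal_def)
    have "b \<bullet> v \<le> b \<bullet> l" using l V0do[OF v] by (simp add: dual_optimal_def)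
    moreover have "b \<bullet> l \<le> c \<bullet> xs" using weak_duality[OF _ lf] opt by (simp add: primal_optimal_def)
    ultimately have ob: "opt_value A c b = b \<bullet> l"
      using optb[OF v] opt_value_eq[OF opt] by simp
    obtain xo where xo: "primal_optimal A c \<beta> xo" using \<delta>(2)[OF d pf] by (auto simp: has_optimal_def)
    have "\<beta> \<bullet> l \<le> opt_value A c \<beta>"
      using weak_duality[OF _ lf, of \<beta> xo] xo opt_value_eq[OF xo] by (simp add: primal_optimal_def)
    then have "(\<beta> - b) \<bullet> l \<le> opt_value A c \<beta> - opt_value A c b" using ob by (simp add: inner_diff_left)
    then have "r * ((\<beta> - b) \<bullet> l) \<le> r * (opt_value A c \<beta> - opt_value A c b)" using r by (rule mult_left_mono)
    then show ?thesis using shift[OF r d pf] by simp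
  qed
  define Z where "Z = (\<lambda>n \<omega>. r n *\<^sub>R (bn n \<omega> - b))"
  have Zm: "Z n \<in> borel_measurable M" for n
    unfolding Z_def by (intro borel_measurable_scaleR borel_measurable_const borel_measurable_diff bn_meas)
  have conv: "conv_in_distr M Z N G" using B1 unfolding Z_def .
  define C where "C = (\<lambda>x. A *v x) ` orth"
  have Cs: "C \<in> sets borel" unfolding C_def by (rule borel_closed[OF closed_C])
  have distm: "(\<lambda>\<beta>. dist \<beta> b) \<in> borel_measurable borel"
    by (rule borel_measurable_continuous_onI) (intro continuous_intros)
  define B1s where "B1s n = {\<omega>\<in>space M. bn n \<omega> \<notin> C}" for n
  define B2s where "B2s n = {\<omega>\<in>space M. \<delta> \<le> dist (bn n \<omega>) b}" for n
  define Bad where "Bad n = B1s n \<union> B2s n" for n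
  have inC: "{\<omega>\<in>space M. bn n \<omega> \<in> C} = bn n -` C \<inter> space M" for n by auto
  have inCs: "{\<omega>\<in>space M. bn n \<omega> \<in> C} \<in> sets M" for n
    unfolding inC by (rule measurable_sets[OF bn_meas Cs])
  have B1s_eq: "B1s n = space M - {\<omega>\<in>space M. bn n \<omega> \<in> C}" for n by (auto simp: B1s_def)
  have B1m: "B1s n \<in> sets M" for n unfolding B1s_eq using inCs by auto
  have B2m: "B2s n \<in> sets M" for n
    unfolding B2s_def by (rule borel_measurable_le) (use measurable_compose[OF bn_meas distm] in auto)
  have Badm: "Bad n \<in> sets M" for n using B1m B2m by (auto simp: Bad_def)
  have hopt: "{\<omega>\<in>space M. has_optimal A c (bn n \<omega>)} = {\<omega>\<in>space M. bn n \<omega> \<in> C}" for n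
    using has_opt_iff[OF l0] by (auto simp: C_def)
  have P1: "(\<lambda>n. measure M (B1s n)) \<longlonglongrightarrow> 0"
  proof -
    have "(\<lambda>n. 1 - measure M {\<omega>\<in>space M. has_optimal A c (bn n \<omega>)}) \<longlonglongrightarrow> 1 - 1"
      by (intro tendsto_diff tendsto_const B2)
    moreover have "measure M (B1s n) = 1 - measure M {\<omega>\<in>space M. has_optimal A c (bn n \<omega>)}" for n
      unfolding B1s_eq hopt using M.prob_compl[OF inCs] by simp
    ultimately show ?thesis by simp
  qed
  have rpos: "eventually (\<lambda>n. 0 < r n) sequentially" using r by (simp add: filterlim_at_top_dense)
  have P2: "(\<lambda>n. measure M (B2s n)) \<longlonglongrightarrow> 0"
  proof (rule Lim_null_comparison)
    have Rlim: "filterlim (\<lambda>n. \<delta> * r n) at_top sequentially"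
      by (rule filterlim_tendsto_pos_mult_at_top[OF tendsto_const \<delta>(1) r])
    show "(\<lambda>n. measure M {\<omega>\<in>space M. \<delta> * r n \<le> norm (Z n \<omega>)}) \<longlonglongrightarrow> 0"
      by (rule tight[OF M N Zm G_meas conv Rlim])
    show "eventually (\<lambda>n. norm (measure M (B2s n)) \<le> measure M {\<omega>\<in>space M. \<delta> * r n \<le> norm (Z n \<omega>)}) sequentially"
      using rpos
    proof eventually_elim
      case (elim n)
      have "B2s n \<subseteq> {\<omega>\<in>space M. \<delta> * r n \<le> norm (Z n \<omega>)}"
      proof
        fix \<omega> assume "\<omega> \<in> B2s n"
        then have om: "\<omega> \<in> space M" "\<delta> \<le> dist (bn n \<omega>) b" by (auto simp: B2s_def)
        have "\<delta> * r n \<le> dist (bn n \<omega>) b * r n" using om(2) elim by (intro mult_right_mono) auto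
        also have "\<dots> = norm (Z n \<omega>)" using elim by (simp add: Z_def dist_norm)
        finally show "\<omega> \<in> {\<omega>\<in>space M. \<delta> * r n \<le> norm (Z n \<omega>)}" using om by simp
      qed
      moreover have "{\<omega>\<in>space M. \<delta> * r n \<le> norm (Z n \<omega>)} \<in> sets M"
        by (rule borel_measurable_le) (use measurable_compose[OF Zm borel_measurable_norm] in auto)
      ultimately show ?case by (simp add: M.finite_measure_mono)
    qed
  qed
  have Plim: "(\<lambda>n. measure M (Bad n)) \<longlonglongrightarrow> 0"
  proof (rule Lim_null_comparison)
    show "(\<lambda>n. measure M (B1s n) + measure M (B2s n)) \<longlonglongrightarrow> 0"
      using tendsto_add[OF P1 P2] by simp
    show "eventually (\<lambda>n. norm (measure M (Bad n)) \<le> measure M (B1s n) + measure M (B2s n)) sequentially"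
      using measure_Un_le[OF B1m B2m] by (simp add: Bad_def)
  qed
  have good: "primal_feasible A (bn n \<omega>) (SOME x. primal_feasible A (bn n \<omega>) x) \<and> dist (bn n \<omega>) b < \<delta>"
    if "\<omega> \<in> space M - Bad n" for n \<omega>
  proof -
    have "bn n \<omega> \<in> C" "\<not> \<delta> \<le> dist (bn n \<omega>) b" using that by (auto simp: Bad_def B1s_def B2s_def)
    then obtain x where "x \<in> orth" "A *v x = bn n \<omega>" "dist (bn n \<omega>) b < \<delta>" by (auto simp: C_def)
    then have "primal_feasible A (bn n \<omega>) x" "dist (bn n \<omega>) b < \<delta>" by (auto simp: primal_feasible_def orth_def)
    then show ?thesis by (metis someI_ex)
  qed
  define X where "X = (\<lambda>n \<omega>. r n * (opt_value A c (bn n \<omega>) - opt_value A c b))"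
  have Xm: "X n \<in> borel_measurable M" for n
    unfolding X_def
    by (intro borel_measurable_times borel_measurable_const borel_measurable_diff
        measurable_compose[OF bn_meas opt_borel[OF full_rank opt]])
  have part1: "conv_in_distr M X N (\<lambda>\<omega>. \<psi> (G \<omega>))"
  proof (rule conv_transfer[OF M N Zm G_meas conv \<psi>c Xm Badm Plim])
    show "eventually (\<lambda>n. \<forall>\<omega>\<in>space M - Bad n. X n \<omega> = \<psi> (Z n \<omega>)) sequentially"
      using rpos
    proof eventually_elim
      case (elim n)
      show ?case
      proof
        fix \<omega> assume "\<omega> \<in> space M - Bad n"
        from good[OF this] show "X n \<omega> = \<psi> (Z n \<omega>)"
          using shift[of "r n"] elim by (auto simp: X_def Z_def)
      qed
    qed
  qed
  define W where "W = (\<Inter>l\<in>{l. dual_optimal A c b l}. {g. g \<bullet> l \<le> \<psi> g})"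
  have Wc: "closed W" unfolding W_def
    by (intro closed_INT ballI closed_Collect_le continuous_intros \<psi>c)
  have \<psi>0: "\<psi> 0 = 0" using finV0 by (simp add: \<psi>_img image_constant_conv)
  have W0: "0 \<in> W" by (simp add: W_def \<psi>0)
  have AEW: "AE \<omega> in N. G \<omega> \<in> W"
  proof (rule conv_closed_AE[OF M N Zm G_meas conv Wc _ Badm Plim])
    show "W \<noteq> {}" using W0 by blast
    show "eventually (\<lambda>n. \<forall>\<omega>\<in>space M - Bad n. Z n \<omega> \<in> W) sequentially"
      using rpos
    proof eventually_elim
      case (elim n)
      show ?case
      proof
        fix \<omega> assume "\<omega> \<in> space M - Bad n"
        from good[OF this] show "Z n \<omega> \<in> W"
          using dualopt[of "r n"] elim by (auto simp: W_def Z_def)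
      qed
    qed
  qed
  have part2: "AE \<omega> in N. ereal (\<psi> (G \<omega>)) = (SUP l \<in> {l. dual_optimal A c b l}. ereal (G \<omega> \<bullet> l))"
    using AEW
  proof (rule AE_mp[OF _ AE_I2], intro impI)
    fix \<omega> assume gw: "G \<omega> \<in> W"
    have "\<psi> (G \<omega>) \<in> (\<lambda>v. G \<omega> \<bullet> v) ` V0" unfolding \<psi>_img using finV0 by (intro Max_in) auto
    then obtain v where v: "v \<in> V0" "\<psi> (G \<omega>) = G \<omega> \<bullet> v" by blast
    show "ereal (\<psi> (G \<omega>)) = (SUP l \<in> {l. dual_optimal A c b l}. ereal (G \<omega> \<bullet> l))"
    proof (rule antisym)
      show "ereal (\<psi> (G \<omega>)) \<le> (SUP l \<in> {l. dual_optimal A c b l}. ereal (G \<omega> \<bullet> l))"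
        unfolding v(2) using V0do[OF v(1)] by (intro SUP_upper) auto
      show "(SUP l \<in> {l. dual_optimal A c b l}. ereal (G \<omega> \<bullet> l)) \<le> ereal (\<psi> (G \<omega>))"
        using gw by (intro SUP_least) (auto simp: W_def)
    qed
  qed
  show ?thesis using part1 part2 unfolding X_def \<psi>_def OB_def by simp
qed

end
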